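(* Let $(\rho_\varepsilon,u_\varepsilon)$ be a smooth solution of the approximating system (A) on $(0,T)\times\mathbb T^d$ with $\rho_\varepsilon>0$. Then $$\frac{d}{dt}\int\Big(\frac{\rho_\varepsilon|u_\varepsilon|^2}{2}+\frac{\rho_\varepsilon^\gamma}{\gamma-1}+f_\varepsilon(\rho_\varepsilon)+2\kappa^2|h_\varepsilon'(\rho_\varepsilon)\nabla\sqrt{\rho_\varepsilon}|^2\Big)+2\nu\int h_\varepsilon(\rho_\varepsilon)|Du_\varepsilon|^2+2\nu\int g_\varepsilon(\rho_\varepsilon)|\operatorname{div}u_\varepsilon|^2+\int\tilde p_\varepsilon(\rho_\varepsilon)|u_\varepsilon|^2=0.$$
   Context: $d\in\{2,3\}$, $\mathbb T^d$ the flat torus, integrals over $\mathbb T^d$. Let $\nu,\kappa>0$ with $\kappa<\nu$, $\gamma>1$, $\varepsilon>0$ small (with $\varepsilon^2(\gamma-1)<1$), $\mu=\nu-\sqrt{\nu^2-\kappa^2}$. For $\rho>0$: $h_\varepsilon(\rho)=\rho+\varepsilon\rho^{7/8}+\varepsilon\rho^\gamma$, $g_\varepsilon(\rho)=\rho h_\varepsilon'(\rho)-h_\varepsilon(\rho)$; $\lambda(\varepsilon)=e^{-1/\varepsilon^4}$; $\tilde p_\varepsilon(\rho)=\lambda(\varepsilon)(\rho^{1/\varepsilon^2}+\rho^{-1/\varepsilon^2})$; $p_\varepsilon$ is the primitive of $\mu\tilde p_\varepsilon(\rho)h_\varepsilon'(\rho)/\rho$ that is a linear combination of powers of $\rho$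 (no additive constant), i.e. $p_\varepsilon(\rho)=\mu\lambda(\varepsilon)\big[\varepsilon^2\rho^{1/\varepsilon^2}+\frac{7\varepsilon^3}{8-\varepsilon^2}\rho^{1/\varepsilon^2-1/8}+\frac{\gamma\varepsilon^3}{1+\varepsilon^2(\gamma-1)}\rho^{1/\varepsilon^2+\gamma-1}-\varepsilon^2\rho^{-1/\varepsilon^2}-\frac{7\varepsilon^3}{8+\varepsilon^2}\rho^{-1/\varepsilon^2-1/8}-\frac{\gamma\varepsilon^3}{1-\varepsilon^2(\gamma-1)}\rho^{-1/\varepsilon^2+\gamma-1}\big]$; $f_\varepsilon$ is obtained from $p_\varepsilon$ by replacing each term $a\rho^s$ by $\frac{a}{s-1}\rho^s$, so that $\rho f_\varepsilon'(\rho)-f_\varepsilon(\rho)=p_\varepsilon(\rho)$. With $Du=(\nabla u+\nabla u^T)/2$, $\mathbb S_\varepsilon=h_\varepsilon(\rho)Du+g_\varepsilon(\rho)\operatorname{div}u\,\mathbb I$ and $\operatorname{div}\mathbb K_\varepsilon=2\rho\nabla\big(h_\varepsilon'(\rho)\operatorname{div}(h_\varepsilon'(\rho)\nabla\sqrt\rho)/\sqrt\rho\big)$, system (A) is $$\partial_t\rho+\operatorname{div}(\rho u)=0,\quad \partial_t(\rho u)+\operatorname{div}(\rho u\otimes u)-2\nu\operatorname{div}\mathbb S_\varepsilon+\nabla(\rho^\gamma+p_\varepsilon(\rho))+\tilde p_\varepsilon(\rho)u=\kappa^2\operatorname{div}\mathbb K_\varepsilon.$$ *)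

theory Defs
  imports "HOL-Analysis.Analysis"
begin

definition ddir :: "'a::real_normed_vector \<Rightarrow> ('a \<Rightarrow> real) \<Rightarrow> 'a \<Rightarrow> real" where
  "ddir v F x = deriv (\<lambda>s. F (x + s *\<^sub>R v)) 0"

primrec iterd :: "'a::real_normed_vector list \<Rightarrow> ('a \<Rightarrow> real) \<Rightarrow> 'a \<Rightarrow> real" where
  "iterd [] F = F"
| "iterd (v # vs) F = ddir v (iterd vs F)"

definition smooth_on :: "'a::real_normed_vector set \<Rightarrow> ('a \<Rightarrow> real) \<Rightarrow> bool" where
  "smooth_on S F \<longleftrightarrow> open S \<and>
     (\<forall>vs. continuous_on S (iterd vs F) \<and>
        (\<forall>v. \<forall>x\<in>S. (\<lambda>s. iterd vs F (x + s *\<^sub>R v)) differentiable (at 0)))"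

definition dx :: "'n::finite \<Rightarrow> (real^'n \<Rightarrow> real) \<Rightarrow> real^'n \<Rightarrow> real" where
  "dx i F x = ddir (axis i 1) F x"

definition dtime :: "(real \<Rightarrow> real^'n \<Rightarrow> real) \<Rightarrow> real \<Rightarrow> real^'n \<Rightarrow> real" where
  "dtime F t x = deriv (\<lambda>s. F s x) t"

definition grad :: "(real^'n::finite \<Rightarrow> real) \<Rightarrow> real^'n \<Rightarrow> real^'n" where
  "grad F x = (\<chi> i. dx i F x)"

definition divg :: "(real^'n::finite \<Rightarrow> real^'n) \<Rightarrow> real^'n \<Rightarrow> real" where
  "divg U x = (\<Sum>i\<in>UNIV. dx i (\<lambda>y. U y $ i) x)"

definition Dsym :: "(real^'n::finite \<Rightarrow> real^'n) \<Rightarrow> 'n \<Rightarrow> 'n \<Rightarrow> real^'n \<Rightarrow> real" where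
  "Dsym U i j x = (dx j (\<lambda>y. U y $ i) x + dx i (\<lambda>y. U y $ j) x) / 2"

definition lam :: "real \<Rightarrow> real" where
  "lam \<epsilon> = exp (- 1 / \<epsilon> ^ 4)"

definition hfun :: "real \<Rightarrow> real \<Rightarrow> real \<Rightarrow> real" where
  "hfun \<epsilon> \<gamma> r = r + \<epsilon> * r powr (7/8) + \<epsilon> * r powr \<gamma>"

definition hp :: "real \<Rightarrow> real \<Rightarrow> real \<Rightarrow> real" where
  "hp \<epsilon> \<gamma> r = deriv (hfun \<epsilon> \<gamma>) r"

definition gfun :: "real \<Rightarrow> real \<Rightarrow> real \<Rightarrow> real" where
  "gfun \<epsilon> \<gamma> r = r * hp \<epsilon> \<gamma> r - hfun \<epsilon> \<gamma> r"

definition ptil :: "real \<Rightarrow> real \<Rightarrow> real" where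
  "ptil \<epsilon> r = lam \<epsilon> * (r powr (1 / \<epsilon>\<^sup>2) + r powr (- 1 / \<epsilon>\<^sup>2))"

definition mu :: "real \<Rightarrow> real \<Rightarrow> real" where
  "mu \<nu> \<kappa> = \<nu> - sqrt (\<nu>\<^sup>2 - \<kappa>\<^sup>2)"

text \<open>The terms (coefficient, exponent) of p_eps / (mu * lambda).\<close>
definition pterms :: "real \<Rightarrow> real \<Rightarrow> (real \<times> real) list" where
  "pterms \<epsilon> \<gamma> =
    [ (\<epsilon>\<^sup>2, 1 / \<epsilon>\<^sup>2),
      (7 * \<epsilon> ^ 3 / (8 - \<epsilon>\<^sup>2), 1 / \<epsilon>\<^sup>2 - 1/8),
      (\<gamma> * \<epsilon> ^ 3 / (1 + \<epsilon>\<^sup>2 * (\<gamma> - 1)), 1 / \<epsilon>\<^sup>2 + \<gamma> - 1),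
      (- \<epsilon>\<^sup>2, - 1 / \<epsilon>\<^sup>2),
      (- 7 * \<epsilon> ^ 3 / (8 + \<epsilon>\<^sup>2), - 1 / \<epsilon>\<^sup>2 - 1/8),
      (- \<gamma> * \<epsilon> ^ 3 / (1 - \<epsilon>\<^sup>2 * (\<gamma> - 1)), - 1 / \<epsilon>\<^sup>2 + \<gamma> - 1) ]"

definition pfun :: "real \<Rightarrow> real \<Rightarrow> real \<Rightarrow> real \<Rightarrow> real \<Rightarrow> real" where
  "pfun \<nu> \<kappa> \<epsilon> \<gamma> r = mu \<nu> \<kappa> * lam \<epsilon> *
     sum_list (map (\<lambda>(a, s). a * r powr s) (pterms \<epsilon> \<gamma>))"

definition ffun :: "real \<Rightarrow> real \<Rightarrow> real \<Rightarrow> real \<Rightarrow> real \<Rightarrow> real" where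
  "ffun \<nu> \<kappa> \<epsilon> \<gamma> r = mu \<nu> \<kappa> * lam \<epsilon> *
     sum_list (map (\<lambda>(a, s). a / (s - 1) * r powr s) (pterms \<epsilon> \<gamma>))"

text \<open>The torus T^d is realised as 1-periodic functions on R^d; integrals over
  T^d are integrals over the unit cube.\<close>

definition is_smooth_solution_A ::
  "real \<Rightarrow> real \<Rightarrow> real \<Rightarrow> real \<Rightarrow> real \<Rightarrow>
   (real \<Rightarrow> real^'n::finite \<Rightarrow> real) \<Rightarrow> (real \<Rightarrow> real^'n \<Rightarrow> real^'n) \<Rightarrow> bool" where
  "is_smooth_solution_A \<nu> \<kappa> \<gamma> \<epsilon> T \<rho> u \<longleftrightarrow>
    smooth_on ({0<..<T} \<times> UNIV) (\<lambda>(t, x). \<rho> t x) \<and>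
    (\<forall>j. smooth_on ({0<..<T} \<times> UNIV) (\<lambda>(t, x). u t x $ j)) \<and>
    (\<forall>t\<in>{0<..<T}. \<forall>x. \<forall>i. \<rho> t (x + axis i 1) = \<rho> t x \<and> u t (x + axis i 1) = u t x) \<and>
    (\<forall>t\<in>{0<..<T}. \<forall>x. \<rho> t x > 0) \<and>
    (\<forall>t\<in>{0<..<T}. \<forall>x.
       dtime \<rho> t x + (\<Sum>i\<in>UNIV. dx i (\<lambda>y. \<rho> t y * u t y $ i) x) = 0) \<and>
    (\<forall>t\<in>{0<..<T}. \<forall>x. \<forall>j.
       dtime (\<lambda>s y. \<rho> s y * u s y $ j) t x
       + (\<Sum>i\<in>UNIV. dx i (\<lambda>y. \<rho> t y * u t y $ i * u t y $ j) x)
       - 2 * \<nu> * (\<Sum>i\<in>UNIV. dx i (\<lambda>y. hfun \<epsilon> \<gamma> (\<rho> t y) * Dsym (u t) i j y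
              + (if i = j then gfun \<epsilon> \<gamma> (\<rho> t y) * divg (u t) y else 0)) x)
       + dx j (\<lambda>y. \<rho> t y powr \<gamma> + pfun \<nu> \<kappa> \<epsilon> \<gamma> (\<rho> t y)) x
       + ptil \<epsilon> (\<rho> t x) * u t x $ j
       = \<kappa>\<^sup>2 * (2 * \<rho> t x * dx j (\<lambda>y. hp \<epsilon> \<gamma> (\<rho> t y) *
             (\<Sum>i\<in>UNIV. dx i (\<lambda>z. hp \<epsilon> \<gamma> (\<rho> t z) * dx i (\<lambda>w. sqrt (\<rho> t w)) z) y)
             / sqrt (\<rho> t y)) x))"

end

theory Submission
  imports Defs
begin


lemma iterd_append: "iterd (vs @ ws) F = iterd vs (iterd ws F)"
  by (induction vs) auto

definition P1 :: "'a::real_normed_vector set \<Rightarrow> ('a \<Rightarrow> real) \<Rightarrow> bool" where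
  "P1 S F \<longleftrightarrow> continuous_on S F \<and> (\<forall>v. \<forall>x\<in>S. (\<lambda>s. F (x + s *\<^sub>R v)) differentiable (at 0))"

lemma smooth_on_P1: "smooth_on S F \<longleftrightarrow> open S \<and> (\<forall>vs. P1 S (iterd vs F))"
  by (auto simp: smooth_on_def P1_def)

lemma smooth_ddir: "smooth_on S F \<Longrightarrow> smooth_on S (ddir v F)"
  unfolding smooth_on_P1
proof safe
  fix vs assume "\<forall>vs. P1 S (iterd vs F)"
  then have "P1 S (iterd (vs @ [v]) F)" by blast
  then show "P1 S (iterd vs (ddir v F))" by (simp add: iterd_append)
qed

lemma smooth_P1: "smooth_on S F \<Longrightarrow> P1 S F"
  unfolding smooth_on_P1 by (metis iterd.simps(1))

lemma smooth_open: "smooth_on S F \<Longrightarrow> open S"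
  by (simp add: smooth_on_def)

lemma ddir_deriv:
  fixes x v :: "'a::real_normed_vector"
  assumes "(\<lambda>s. F (x + s *\<^sub>R v)) differentiable (at 0)"
  shows "((\<lambda>s. F (x + s *\<^sub>R v)) has_real_derivative ddir v F x) (at 0)"
  using assms unfolding ddir_def by (simp add: DERIV_deriv_iff_real_differentiable)

lemma P1_deriv: "P1 S F \<Longrightarrow> x \<in> S \<Longrightarrow>
   ((\<lambda>s. F (x + s *\<^sub>R v)) has_real_derivative ddir v F x) (at 0)"
  unfolding P1_def by (auto intro: ddir_deriv)

lemma line_deriv_shift:
  fixes x y v :: "'a::real_normed_vector"
  assumes "((\<lambda>s. F (y + s *\<^sub>R v)) has_real_derivative D) (at 0)" "y = x + s0 *\<^sub>R v"
  shows "((\<lambda>s. F (x + s *\<^sub>R v)) has_real_derivative D) (at s0)"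
proof -
  have "((\<lambda>s. F (x + (s + s0) *\<^sub>R v)) has_real_derivative D) (at 0)"
  proof -
    have "(\<lambda>s. F (x + (s + s0) *\<^sub>R v)) = (\<lambda>s. F (y + s *\<^sub>R v))"
      using assms(2) by (simp add: scaleR_add_left add_ac)
    then show ?thesis using assms(1) by simp
  qed
  then show ?thesis using DERIV_shift[of "\<lambda>s. F (x + s *\<^sub>R v)" D 0 s0] by simp
qed

lemma open_line: fixes x v :: "'a::real_normed_vector" shows "open S \<Longrightarrow> open {s::real. x + s *\<^sub>R v \<in> S}"
proof -
  assume "open S"
  have "continuous_on UNIV (\<lambda>s::real. x + s *\<^sub>R v)"
    by (intro continuous_intros)
  note c = this
  have "open ((\<lambda>s::real. x + s *\<^sub>R v) -` S \<inter> UNIV)"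
    using continuous_on_open_vimage[OF open_UNIV, THEN iffD1, OF c, rule_format, OF \<open>open S\<close>] .
  then show ?thesis by (simp add: vimage_def)
qed

lemma ddir_cong:
  fixes x :: "'a::real_normed_vector"
  assumes "open S" "x \<in> S" "\<And>y. y \<in> S \<Longrightarrow> F y = G y"
  shows "ddir v F x = ddir v G x"
  unfolding ddir_def
proof (rule deriv_cong_ev)
  have "eventually (\<lambda>s. s \<in> {s::real. x + s *\<^sub>R v \<in> S}) (nhds 0)"
    using open_line[OF assms(1)] assms(2) by (intro eventually_nhds_in_open) auto
  then show "eventually (\<lambda>s. F (x + s *\<^sub>R v) = G (x + s *\<^sub>R v)) (nhds 0)"
    by eventually_elim (use assms in auto)
qed simp

lemma P1_cong:
  assumes "open S" "P1 S F" "\<And>y. y \<in> S \<Longrightarrow> F y = G y"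
  shows "P1 S G"
  unfolding P1_def
proof safe
  show "continuous_on S G" using assms continuous_on_cong unfolding P1_def by metis
next
  fix v x assume x: "x \<in> S"
  have "((\<lambda>s. F (x + s *\<^sub>R v)) has_real_derivative ddir v F x) (at 0)"
    using P1_deriv[OF assms(2) x] .
  then have "((\<lambda>s. G (x + s *\<^sub>R v)) has_real_derivative ddir v F x) (at 0)"
    by (rule has_field_derivative_transform_within_open[OF _ open_line[OF assms(1)]])
       (use x assms(3) in auto)
  then show "(\<lambda>s. G (x + s *\<^sub>R v)) differentiable (at 0)"
    using real_differentiable_def by blast
qed

lemma class_smooth:
  assumes S: "open S"
    and P: "\<And>F. F \<in> C \<Longrightarrow> P1 S F"
    and D: "\<And>F v. F \<in> C \<Longrightarrow> \<exists>G\<in>C. \<forall>x\<in>S. ddir v F x = G x"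
    and F: "F \<in> C"
  shows "smooth_on S F"
proof -
  have "\<forall>F\<in>C. \<exists>G\<in>C. \<forall>x\<in>S. iterd vs F x = G x" for vs
  proof (induction vs)
    case Nil then show ?case by auto
  next
    case (Cons v vs)
    show ?case
    proof
      fix F assume "F \<in> C"
      with Cons obtain G where G: "G \<in> C" "\<forall>x\<in>S. iterd vs F x = G x" by blast
      obtain H where H: "H \<in> C" "\<forall>x\<in>S. ddir v G x = H x" using D[OF G(1)] by blast
      have "\<forall>x\<in>S. iterd (v # vs) F x = H x"
        using ddir_cong[OF S _ , of _ "iterd vs F" G v] G(2) H(2) by auto
      then show "\<exists>G\<in>C. \<forall>x\<in>S. iterd (v # vs) F x = G x" using H(1) by blast
    qed
  qed
  note h = this
  have "P1 S (iterd vs F)" for vs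
  proof -
    obtain G where G: "G \<in> C" "\<forall>x\<in>S. iterd vs F x = G x" using h F by blast
    show ?thesis
      by (rule P1_cong[OF S P[OF G(1)]]) (use G(2) in simp)
  qed
  then have "\<forall>vs. P1 S (iterd vs F)" by (rule allI)
  with S show ?thesis unfolding smooth_on_P1 by (rule conjI)
qed

lemma P1_line_diff: "P1 S F \<Longrightarrow> x \<in> S \<Longrightarrow> (\<lambda>s. F (x + s *\<^sub>R v)) differentiable (at 0)"
  unfolding P1_def by blast

lemma P1_cont: "P1 S F \<Longrightarrow> continuous_on S F"
  unfolding P1_def by blast

lemma P1_intro:
  assumes "continuous_on S F"
    "\<And>v x. x \<in> S \<Longrightarrow> \<exists>D. ((\<lambda>s. F (x + s *\<^sub>R v)) has_real_derivative D) (at 0)"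
  shows "P1 S F"
  unfolding P1_def using assms real_differentiable_def by blast

inductive cl :: "'a::real_normed_vector set \<Rightarrow> ('a \<Rightarrow> real) \<Rightarrow> bool" for S where
  cl_base: "smooth_on S F \<Longrightarrow> cl S F"
| cl_const: "cl S (\<lambda>_. c)"
| cl_add: "cl S F \<Longrightarrow> cl S G \<Longrightarrow> cl S (\<lambda>z. F z + G z)"
| cl_mult: "cl S F \<Longrightarrow> cl S G \<Longrightarrow> cl S (\<lambda>z. F z * G z)"
| cl_powr: "cl S F \<Longrightarrow> (\<forall>z\<in>S. 0 < F z) \<Longrightarrow> cl S (\<lambda>z. F z powr a)"

lemma cl_props:
  assumes S: "open S" and "cl S F"
  shows "P1 S F \<and> (\<forall>v. \<exists>G. cl S G \<and> (\<forall>x\<in>S. ddir v F x = G x))"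
  using assms(2)
proof induction
  case (cl_base F)
  then show ?case using smooth_P1 smooth_ddir cl.cl_base by blast
next
  case (cl_const c)
  have "P1 S (\<lambda>_. c)"
    by (rule P1_intro) (auto intro!: continuous_intros DERIV_const)
  moreover have "ddir v (\<lambda>_. c) x = 0" for v x
    unfolding ddir_def by (rule DERIV_imp_deriv) (rule DERIV_const)
  ultimately show ?case using cl.cl_const by blast
next
  case (cl_add F G)
  have P: "P1 S (\<lambda>z. F z + G z)"
  proof (rule P1_intro)
    show "continuous_on S (\<lambda>z. F z + G z)"
      using cl_add P1_cont by (intro continuous_intros) auto
    fix v x assume x: "x \<in> S"
    show "\<exists>D. ((\<lambda>s. F (x + s *\<^sub>R v) + G (x + s *\<^sub>R v)) has_real_derivative D) (at 0)"
      using DERIV_add[OF P1_deriv[OF _ x] P1_deriv[OF _ x]] cl_add by blast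
  qed
  have "\<exists>H. cl S H \<and> (\<forall>x\<in>S. ddir v (\<lambda>z. F z + G z) x = H x)" for v
  proof -
    obtain F' where F': "cl S F'" "\<forall>x\<in>S. ddir v F x = F' x" using cl_add by blast
    obtain G' where G': "cl S G'" "\<forall>x\<in>S. ddir v G x = G' x" using cl_add by blast
    have "ddir v (\<lambda>z. F z + G z) x = F' x + G' x" if x: "x \<in> S" for x
      unfolding ddir_def
      using DERIV_imp_deriv[OF DERIV_add[OF P1_deriv[OF _ x] P1_deriv[OF _ x]]] cl_add F' G' x
      unfolding ddir_def by auto
    then show ?thesis using cl.cl_add[OF F'(1) G'(1)] by blast
  qed
  then show ?case using P by blast
next
  case (cl_mult F G)
  have P: "P1 S (\<lambda>z. F z * G z)"
  proof (rule P1_intro)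
    show "continuous_on S (\<lambda>z. F z * G z)"
      using cl_mult P1_cont by (intro continuous_intros) auto
    fix v x assume x: "x \<in> S"
    show "\<exists>D. ((\<lambda>s. F (x + s *\<^sub>R v) * G (x + s *\<^sub>R v)) has_real_derivative D) (at 0)"
      using DERIV_mult[OF P1_deriv[OF _ x] P1_deriv[OF _ x]] cl_mult by blast
  qed
  have "\<exists>H. cl S H \<and> (\<forall>x\<in>S. ddir v (\<lambda>z. F z * G z) x = H x)" for v
  proof -
    obtain F' where F': "cl S F'" "\<forall>x\<in>S. ddir v F x = F' x" using cl_mult by blast
    obtain G' where G': "cl S G'" "\<forall>x\<in>S. ddir v G x = G' x" using cl_mult by blast
    have "ddir v (\<lambda>z. F z * G z) x = F' x * G x + F x * G' x" if x: "x \<in> S" for x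
      unfolding ddir_def
      using DERIV_imp_deriv[OF DERIV_mult[OF P1_deriv[OF _ x] P1_deriv[OF _ x]]] cl_mult F' G' x
      unfolding ddir_def by auto
    then show ?thesis
      using cl.cl_add[OF cl.cl_mult[OF F'(1) cl_mult(2)] cl.cl_mult[OF cl_mult(1) G'(1)]] by blast
  qed
  then show ?case using P by blast
next
  case (cl_powr F a)
  have P: "P1 S (\<lambda>z. F z powr a)"
  proof (rule P1_intro)
    show "continuous_on S (\<lambda>z. F z powr a)"
      using cl_powr P1_cont by (intro continuous_intros) auto
    fix v x assume x: "x \<in> S"
    show "\<exists>D. ((\<lambda>s. F (x + s *\<^sub>R v) powr a) has_real_derivative D) (at 0)"
      using DERIV_fun_powr[OF P1_deriv[OF _ x]] cl_powr x by fastforce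
  qed
  have "\<exists>H. cl S H \<and> (\<forall>x\<in>S. ddir v (\<lambda>z. F z powr a) x = H x)" for v
  proof -
    obtain F' where F': "cl S F'" "\<forall>x\<in>S. ddir v F x = F' x" using cl_powr by blast
    have "ddir v (\<lambda>z. F z powr a) x = a * F x powr (a - 1) * F' x" if x: "x \<in> S" for x
    proof -
      have "((\<lambda>s. F (x + s *\<^sub>R v) powr a) has_real_derivative
              a * F (x + 0 *\<^sub>R v) powr (a - real 1) * ddir v F x) (at 0)"
        using DERIV_fun_powr[OF P1_deriv[OF _ x], of F v a] cl_powr x by auto
      then show ?thesis unfolding ddir_def using F' x
        by (auto dest!: DERIV_imp_deriv simp: ddir_def)
    qed
    moreover have "cl S (\<lambda>z. a * F z powr (a - 1) * F' z)"
      by (intro cl.cl_mult cl.cl_const cl.cl_powr F'(1) cl_powr)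
    ultimately show ?thesis by blast
  qed
  then show ?case using P by blast
qed

lemma cl_smooth: "open S \<Longrightarrow> cl S F \<Longrightarrow> smooth_on S F"
proof -
  assume S: "open S" and F: "cl S F"
  show ?thesis
  proof (rule class_smooth[OF S, of "{F. cl S F}"])
    fix F assume "F \<in> {F. cl S F}"
    then have "cl S F" by simp
    note c = cl_props[OF S this]
    show "P1 S F" using c by simp
    fix v
    obtain G where "cl S G" "\<forall>x\<in>S. ddir v F x = G x" using c by blast
    then show "\<exists>G\<in>{F. cl S F}. \<forall>x\<in>S. ddir v F x = G x" by blast
  qed (use F in simp)
qed

lemma smooth_const: "open S \<Longrightarrow> smooth_on S (\<lambda>_. c)"
  by (rule cl_smooth, assumption, rule cl.cl_const)

lemma smooth_add: "smooth_on S F \<Longrightarrow> smooth_on S G \<Longrightarrow> smooth_on S (\<lambda>z. F z + G z)"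
  by (rule cl_smooth[OF smooth_open], assumption, rule cl.cl_add[OF cl.cl_base cl.cl_base])

lemma smooth_mult: "smooth_on S F \<Longrightarrow> smooth_on S G \<Longrightarrow> smooth_on S (\<lambda>z. F z * G z)"
  by (rule cl_smooth[OF smooth_open], assumption, rule cl.cl_mult[OF cl.cl_base cl.cl_base])

lemma smooth_powr: "smooth_on S F \<Longrightarrow> (\<And>z. z \<in> S \<Longrightarrow> 0 < F z) \<Longrightarrow> smooth_on S (\<lambda>z. F z powr a)"
  by (rule cl_smooth[OF smooth_open], assumption, rule cl.cl_powr[OF cl.cl_base]) auto

lemma smooth_cmult: "smooth_on S F \<Longrightarrow> smooth_on S (\<lambda>z. c * F z)"
proof -
  assume a: "smooth_on S F"
  have "smooth_on S (\<lambda>_. c)" using smooth_const[OF smooth_open[OF a]] .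
  from smooth_mult[OF this a] show ?thesis .
qed

lemma smooth_minus: "smooth_on S F \<Longrightarrow> smooth_on S (\<lambda>z. - F z)"
proof -
  assume a: "smooth_on S F"
  have "smooth_on S (\<lambda>z. (-1) * F z)" using smooth_cmult[OF a] .
  then show ?thesis by simp
qed

lemma smooth_diff: "smooth_on S F \<Longrightarrow> smooth_on S G \<Longrightarrow> smooth_on S (\<lambda>z. F z - G z)"
proof -
  assume a: "smooth_on S F" "smooth_on S G"
  have "smooth_on S (\<lambda>z. F z + - G z)" using smooth_add[OF a(1) smooth_minus[OF a(2)]] .
  then show ?thesis by simp
qed

lemma smooth_sum: "finite I \<Longrightarrow> open S \<Longrightarrow> (\<And>i. i \<in> I \<Longrightarrow> smooth_on S (f i)) \<Longrightarrow>
    smooth_on S (\<lambda>z. \<Sum>i\<in>I. f i z)"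
proof (induction I rule: finite_induct)
  case empty then show ?case by (simp add: smooth_const)
next
  case (insert a I)
  then show ?case by (simp add: smooth_add)
qed

lemma smooth_cong:
  assumes "smooth_on S F" "\<And>z. z \<in> S \<Longrightarrow> F z = G z"
  shows "smooth_on S G"
proof -
  have S: "open S" using assms smooth_open by blast
  let ?C = "{H. \<exists>F. smooth_on S F \<and> (\<forall>z\<in>S. F z = H z)}"
  show ?thesis
  proof (rule class_smooth[OF S, of ?C])
    fix H assume "H \<in> ?C"
    then obtain F where F: "smooth_on S F" "\<forall>z\<in>S. F z = H z" by blast
    show "P1 S H" using P1_cong[OF S smooth_P1[OF F(1)]] F(2) by blast
    fix v
    have "\<forall>x\<in>S. ddir v H x = ddir v F x"
    proof
      fix x assume "x \<in> S"
      then show "ddir v H x = ddir v F x"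
        by (rule ddir_cong[OF S]) (use F(2) in simp)
    qed
    then show "\<exists>G\<in>?C. \<forall>x\<in>S. ddir v H x = G x" using smooth_ddir[OF F(1)] by blast
  qed (use assms in blast)
qed

lemma smooth_divide:
  assumes "smooth_on S F" "smooth_on S G" "\<And>z. z \<in> S \<Longrightarrow> 0 < G z"
  shows "smooth_on S (\<lambda>z. F z / G z)"
proof (rule smooth_cong)
  show "smooth_on S (\<lambda>z. F z * G z powr (-1))"
    using assms by (intro smooth_mult smooth_powr) auto
  fix z assume "z \<in> S" then show "F z * G z powr (-1) = F z / G z"
    using assms(3)[of z] by (simp add: powr_minus divide_inverse)
qed

lemma smooth_sqrt:
  assumes "smooth_on S G" "\<And>z. z \<in> S \<Longrightarrow> 0 < G z"
  shows "smooth_on S (\<lambda>z. sqrt (G z))"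
proof (rule smooth_cong)
  show "smooth_on S (\<lambda>z. G z powr (1/2))"
    using assms by (intro smooth_powr) auto
  fix z assume "z \<in> S" then show "G z powr (1/2) = sqrt (G z)"
    using assms(2)[of z] by (simp add: powr_half_sqrt)
qed

lemma smooth_deriv:
  "smooth_on S F \<Longrightarrow> x \<in> S \<Longrightarrow>
   ((\<lambda>s. F (x + s *\<^sub>R v)) has_real_derivative ddir v F x) (at 0)"
  using P1_deriv smooth_P1 by blast

lemma ddir_chain:
  assumes "smooth_on S F" "x \<in> S" "(\<phi> has_real_derivative \<phi>') (at (F x))"
  shows "ddir v (\<lambda>z. \<phi> (F z)) x = \<phi>' * ddir v F x"
proof -
  have "((\<lambda>s. \<phi> (F (x + s *\<^sub>R v))) has_real_derivative \<phi>' * ddir v F x) (at 0)"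
    by (rule DERIV_chain2[OF _ smooth_deriv[OF assms(1,2)]]) (use assms(3) in simp)
  then show ?thesis unfolding ddir_def[of v "\<lambda>z. \<phi> (F z)"] by (rule DERIV_imp_deriv)
qed

lemma ddir_add: "smooth_on S F \<Longrightarrow> smooth_on S G \<Longrightarrow> x \<in> S \<Longrightarrow>
   ddir v (\<lambda>z. F z + G z) x = ddir v F x + ddir v G x"
proof -
  assume a: "smooth_on S F" "smooth_on S G" "x \<in> S"
  have "((\<lambda>s. F (x + s *\<^sub>R v) + G (x + s *\<^sub>R v)) has_real_derivative
          ddir v F x + ddir v G x) (at 0)"
    by (rule DERIV_add[OF smooth_deriv[OF a(1,3)] smooth_deriv[OF a(2,3)]])
  then show ?thesis unfolding ddir_def[of v "\<lambda>z. F z + G z"]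
    by (simp add: DERIV_imp_deriv)
qed

lemma ddir_mult: "smooth_on S F \<Longrightarrow> smooth_on S G \<Longrightarrow> x \<in> S \<Longrightarrow>
   ddir v (\<lambda>z. F z * G z) x = ddir v F x * G x + F x * ddir v G x"
proof -
  assume a: "smooth_on S F" "smooth_on S G" "x \<in> S"
  have "((\<lambda>s. F (x + s *\<^sub>R v) * G (x + s *\<^sub>R v)) has_real_derivative
          ddir v F x * G (x + 0 *\<^sub>R v) + ddir v G x * F (x + 0 *\<^sub>R v)) (at 0)"
    by (rule DERIV_mult[OF smooth_deriv[OF a(1,3)] smooth_deriv[OF a(2,3)]])
  then have "ddir v (\<lambda>z. F z * G z) x = ddir v F x * G x + ddir v G x * F x"
    unfolding ddir_def[of v "\<lambda>z. F z * G z"] by (simp add: DERIV_imp_deriv)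
  then show ?thesis by simp
qed

lemma ddir_const: "ddir v (\<lambda>_. c) x = 0"
  unfolding ddir_def by (rule DERIV_imp_deriv) (rule DERIV_const)

lemma ddir_cmult: "smooth_on S F \<Longrightarrow> x \<in> S \<Longrightarrow> ddir v (\<lambda>z. c * F z) x = c * ddir v F x"
proof -
  assume a: "smooth_on S F" "x \<in> S"
  have "ddir v (\<lambda>z. c * F z) x = ddir v (\<lambda>_. c) x * F x + c * ddir v F x"
    by (rule ddir_mult[OF smooth_const[OF smooth_open[OF a(1)]] a(1) a(2)])
  then show ?thesis by (simp add: ddir_const)
qed

lemma ddir_minus: "smooth_on S F \<Longrightarrow> x \<in> S \<Longrightarrow> ddir v (\<lambda>z. - F z) x = - ddir v F x"
proof -
  assume a: "smooth_on S F" "x \<in> S"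
  show ?thesis using ddir_cmult[OF a, of v "-1"] by simp
qed

lemma ddir_diff: "smooth_on S F \<Longrightarrow> smooth_on S G \<Longrightarrow> x \<in> S \<Longrightarrow>
   ddir v (\<lambda>z. F z - G z) x = ddir v F x - ddir v G x"
proof -
  assume a: "smooth_on S F" "smooth_on S G" "x \<in> S"
  have "ddir v (\<lambda>z. F z + - G z) x = ddir v F x + ddir v (\<lambda>z. - G z) x"
    by (rule ddir_add[OF a(1) smooth_minus[OF a(2)] a(3)])
  then show ?thesis using ddir_minus[OF a(2) a(3), of v] by simp
qed

lemma ddir_sum: "finite I \<Longrightarrow> open S \<Longrightarrow> (\<And>i. i \<in> I \<Longrightarrow> smooth_on S (f i)) \<Longrightarrow> x \<in> S \<Longrightarrow>
    ddir v (\<lambda>z. \<Sum>i\<in>I. f i z) x = (\<Sum>i\<in>I. ddir v (f i) x)"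
proof (induction I rule: finite_induct)
  case empty then show ?case by (simp add: ddir_const)
next
  case (insert a I)
  then have "ddir v (\<lambda>z. f a z + (\<Sum>i\<in>I. f i z)) x = ddir v (f a) x + ddir v (\<lambda>z. \<Sum>i\<in>I. f i z) x"
    by (intro ddir_add smooth_sum insert.hyps insert.prems) (use insert.prems in auto)
  with insert show ?case by simp
qed


lemma smooth_line_deriv:
  fixes x v :: "'a::real_normed_vector"
  assumes "smooth_on S F" "x + s0 *\<^sub>R v \<in> S"
  shows "((\<lambda>s. F (x + s *\<^sub>R v)) has_real_derivative ddir v F (x + s0 *\<^sub>R v)) (at s0)"
  by (rule line_deriv_shift[OF smooth_deriv[OF assms] refl])

lemma ddir_swap:
  fixes z v w :: "'a::real_normed_vector"
  assumes F: "smooth_on S F" and z: "z \<in> S"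
  shows "ddir v (ddir w F) z = ddir w (ddir v F) z"
proof -
  have S: "open S" using smooth_open[OF F] .
  obtain r where r: "r > 0" "ball z r \<subseteq> S" using S z open_contains_ball by blast
  define K where "K = norm v + norm w + 1"
  have K: "K > 0" unfolding K_def by (simp add: add_nonneg_pos)
  define \<delta> where "\<delta> = r / (2 * K)"
  have d: "\<delta> > 0" unfolding \<delta>_def using r K by simp
  define p where "p a b = z + b *\<^sub>R w + a *\<^sub>R v" for a b :: real
  have pS: "p a b \<in> S" if "\<bar>a\<bar> \<le> \<delta>" "\<bar>b\<bar> \<le> \<delta>" for a b
  proof -
    have "norm (b *\<^sub>R w + a *\<^sub>R v) \<le> \<bar>b\<bar> * norm w + \<bar>a\<bar> * norm v"
      using norm_triangle_ineq[of "b *\<^sub>R w" "a *\<^sub>R v"] by simp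
    also have "\<dots> \<le> \<delta> * norm w + \<delta> * norm v"
      using that by (intro add_mono mult_right_mono) auto
    also have "\<dots> = r * (norm v + norm w) / (2 * K)" unfolding \<delta>_def using K by (simp add: field_simps)
    also have "\<dots> < r"
    proof -
      have "norm v + norm w < 2 * K" unfolding K_def by (smt (verit) norm_ge_zero)
      then have "r * (norm v + norm w) < r * (2 * K)" using r by simp
      then show ?thesis using K by (simp add: field_simps)
    qed
    finally have "dist (p a b) z < r" unfolding p_def dist_norm by (simp add: algebra_simps)
    then show ?thesis using r by (auto simp: dist_commute)
  qed
  have pa: "p a b = (z + a *\<^sub>R v) + b *\<^sub>R w" for a b by (simp add: p_def algebra_simps)
  have da: "((\<lambda>a. G (p a b)) has_real_derivative ddir v G (p a b)) (at a)"
    if G: "smooth_on S G" and ab: "\<bar>a\<bar> \<le> \<delta>" "\<bar>b\<bar> \<le> \<delta>" for G a b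
    using smooth_line_deriv[OF G, of "z + b *\<^sub>R w" a v] pS[OF ab] unfolding p_def by simp
  have db: "((\<lambda>b. G (p a b)) has_real_derivative ddir w G (p a b)) (at b)"
    if G: "smooth_on S G" and ab: "\<bar>a\<bar> \<le> \<delta>" "\<bar>b\<bar> \<le> \<delta>" for G a b
    using smooth_line_deriv[OF G, of "z + a *\<^sub>R v" b w] pS[OF ab] unfolding pa by simp
  have contp: "continuous_on A (\<lambda>x. G (p (f1 x) (f2 x)))"
    if G: "smooth_on S G" and f: "continuous_on A f1" "continuous_on A f2"
      and A: "\<And>x. x \<in> A \<Longrightarrow> \<bar>f1 x\<bar> \<le> \<delta> \<and> \<bar>f2 x\<bar> \<le> \<delta>" for G A f1 f2
  proof (rule continuous_on_compose2[OF P1_cont[OF smooth_P1[OF G]]])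
    show "continuous_on A (\<lambda>x. p (f1 x) (f2 x))"
      unfolding p_def using f by (intro continuous_intros)
    show "(\<lambda>x. p (f1 x) (f2 x)) ` A \<subseteq> S" using A pS by auto
  qed
  have Fv: "smooth_on S (ddir v F)" and Fw: "smooth_on S (ddir w F)"
    and X: "smooth_on S (ddir w (ddir v F))" and Y: "smooth_on S (ddir v (ddir w F))"
    using F by (auto intro: smooth_ddir)
  have step1: "ddir w F (p a 0) - ddir w F (p (-\<delta>) 0) = integral {-\<delta>..a} (\<lambda>\<tau>. ddir w (ddir v F) (p \<tau> 0))"
    if a: "a \<in> {-\<delta>..\<delta>}" for a
  proof -
    define \<Phi> where "\<Phi> b = integral {-\<delta>..a} (\<lambda>\<tau>. ddir v F (p \<tau> b))" for b
    have ftc: "\<Phi> b = F (p a b) - F (p (-\<delta>) b)" if b: "b \<in> {-\<delta><..<\<delta>}" for b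
    proof -
      have "((\<lambda>\<tau>. ddir v F (p \<tau> b)) has_integral (F (p a b) - F (p (-\<delta>) b))) {-\<delta>..a}"
      proof (rule fundamental_theorem_of_calculus)
        show "- \<delta> \<le> a" using a by simp
        fix \<tau> assume t: "\<tau> \<in> {-\<delta>..a}"
        have "((\<lambda>a. F (p a b)) has_real_derivative ddir v F (p \<tau> b)) (at \<tau>)"
          by (rule da[OF F]) (use t a b in auto)
        then show "((\<lambda>a. F (p a b)) has_vector_derivative ddir v F (p \<tau> b)) (at \<tau> within {-\<delta>..a})"
          by (simp add: has_real_derivative_iff_has_vector_derivative[symmetric] has_field_derivative_at_within)
      qed
      then show ?thesis unfolding \<Phi>_def by (rule integral_unique)
    qed
    have L: "(\<Phi> has_real_derivative integral (cbox (-\<delta>) a) (\<lambda>\<tau>. ddir w (ddir v F) (p \<tau> 0))) (at 0 within {-\<delta><..<\<delta>})"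
      unfolding \<Phi>_def box_real(2)[symmetric]
    proof (rule leibniz_rule_field_derivative[where fx="\<lambda>b \<tau>. ddir w (ddir v F) (p \<tau> b)"])
      fix b \<tau> assume b: "b \<in> {-\<delta><..<\<delta>}" and t: "\<tau> \<in> cbox (-\<delta>) a"
      have "((\<lambda>b. ddir v F (p \<tau> b)) has_real_derivative ddir w (ddir v F) (p \<tau> b)) (at b)"
        by (rule db[OF Fv]) (use t a b in auto)
      then show "((\<lambda>b. ddir v F (p \<tau> b)) has_real_derivative ddir w (ddir v F) (p \<tau> b)) (at b within {-\<delta><..<\<delta>})"
        by (rule has_field_derivative_at_within)
    next
      fix b assume b: "b \<in> {-\<delta><..<\<delta>}"
      have "continuous_on (cbox (-\<delta>) a) (\<lambda>\<tau>. ddir v F (p \<tau> b))"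
        by (rule contp[OF Fv]) (use a b in \<open>auto intro!: continuous_intros\<close>)
      then show "(\<lambda>\<tau>. ddir v F (p \<tau> b)) integrable_on cbox (-\<delta>) a"
        by (rule integrable_continuous)
    next
      have "continuous_on ({-\<delta><..<\<delta>} \<times> cbox (-\<delta>) a) (\<lambda>x. ddir w (ddir v F) (p (snd x) (fst x)))"
        by (rule contp[OF X]) (use a in \<open>auto intro!: continuous_intros\<close>)
      then show "continuous_on ({-\<delta><..<\<delta>} \<times> cbox (-\<delta>) a) (\<lambda>(b, \<tau>). ddir w (ddir v F) (p \<tau> b))"
        by (simp add: case_prod_beta)
    qed (use d in auto)
    then have L': "(\<Phi> has_real_derivative integral {-\<delta>..a} (\<lambda>\<tau>. ddir w (ddir v F) (p \<tau> 0))) (at 0)"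
      using at_within_open[of 0 "{-\<delta><..<\<delta>}"] d by simp
    have R: "((\<lambda>b. F (p a b) - F (p (-\<delta>) b)) has_real_derivative
               ddir w F (p a 0) - ddir w F (p (-\<delta>) 0)) (at 0)"
      by (intro DERIV_diff db[OF F]) (use a d in auto)
    have R': "(\<Phi> has_real_derivative ddir w F (p a 0) - ddir w F (p (-\<delta>) 0)) (at 0)"
      by (rule has_field_derivative_transform_within_open[OF R, of "{-\<delta><..<\<delta>}"])
         (use d ftc in auto)
    show ?thesis using DERIV_unique[OF R' L'] .
  qed
  have A: "((\<lambda>a. ddir w F (p a 0) - ddir w F (p (-\<delta>) 0)) has_real_derivative
             ddir v (ddir w F) (p 0 0)) (at 0)"
    using DERIV_diff[OF da[OF Fw, of 0 0] DERIV_const[of "ddir w F (p (-\<delta>) 0)"]] d by simp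
  have B0: "((\<lambda>a. integral {-\<delta>..a} (\<lambda>\<tau>. ddir w (ddir v F) (p \<tau> 0))) has_vector_derivative
             ddir w (ddir v F) (p 0 0)) (at 0 within {-\<delta>..\<delta>})"
  proof (rule integral_has_vector_derivative)
    show "continuous_on {-\<delta>..\<delta>} (\<lambda>\<tau>. ddir w (ddir v F) (p \<tau> 0))"
      by (rule contp[OF X]) (auto intro!: continuous_intros simp: d less_imp_le)
  qed (use d in auto)
  have B: "((\<lambda>a. integral {-\<delta>..a} (\<lambda>\<tau>. ddir w (ddir v F) (p \<tau> 0))) has_real_derivative
             ddir w (ddir v F) (p 0 0)) (at 0)"
    using B0 at_within_Icc_at[of "-\<delta>" 0 \<delta>] d
    by (simp add: has_real_derivative_iff_has_vector_derivative)
  have A': "((\<lambda>a. integral {-\<delta>..a} (\<lambda>\<tau>. ddir w (ddir v F) (p \<tau> 0))) has_real_derivative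
             ddir v (ddir w F) (p 0 0)) (at 0)"
    by (rule has_field_derivative_transform_within_open[OF A, of "{-\<delta><..<\<delta>}"])
       (use d step1 in auto)
  have "ddir v (ddir w F) (p 0 0) = ddir w (ddir v F) (p 0 0)" using DERIV_unique[OF A' B] .
  then show ?thesis by (simp add: p_def)
qed


lemma One_nth[simp]: "(One::real^'n) $ j = 1" by (metis Cart_1 one_index)

lemma Basis_sum_nth[simp]: "(\<Sum>x\<in>Basis. (x::real^'n) $ j) = 1"
  using One_nth[of j] by simp

lemma box_split_aux:
  fixes x a b a' b' :: "real^'n"
  assumes o: "\<And>j. j \<noteq> i \<Longrightarrow> a' $ j = a $ j \<and> b' $ j = b $ j"
    and c: "\<And>t. (a $ i \<le> t \<and> t \<le> b $ i \<and> P t) \<longleftrightarrow> (a' $ i \<le> t \<and> t \<le> b' $ i)"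
  shows "((\<forall>j. a $ j \<le> x $ j \<and> x $ j \<le> b $ j) \<and> P (x $ i)) \<longleftrightarrow> (\<forall>j. a' $ j \<le> x $ j \<and> x $ j \<le> b' $ j)"
proof safe
  fix j assume A: "\<forall>j. a $ j \<le> x $ j \<and> x $ j \<le> b $ j" "P (x $ i)"
  show "a' $ j \<le> x $ j" "x $ j \<le> b' $ j"
    using spec[OF A(1), of j] A(2) o[of j] c[of "x $ i"] by (cases "j = i", auto)+
next
  fix j assume A: "\<forall>j. a' $ j \<le> x $ j \<and> x $ j \<le> b' $ j"
  show "a $ j \<le> x $ j" "x $ j \<le> b $ j"
    using spec[OF A, of j] o[of j] c[of "x $ i"] by (cases "j = i", auto)+
  show "P (x $ i)" using spec[OF A, of i] c[of "x $ i"] by simp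
qed

lemma torus_shift:
  fixes F :: "real^'n \<Rightarrow> real"
  assumes cont: "continuous_on UNIV F" and per: "\<And>x. F (x + axis i 1) = F x"
    and s: "0 \<le> s" "s \<le> 1"
  shows "integral (cbox 0 One) (\<lambda>x. F (x + s *\<^sub>R axis i 1)) = integral (cbox 0 One) F"
proof -
  define e :: "real^'n" where "e = axis i 1"
  define c :: "real^'n" where "c = s *\<^sub>R e"
  define h :: "real^'n" where "h = (\<chi> j. if j = i then s else 1)"
  have eB: "e \<in> Basis" unfolding e_def by simp
  have ie: "x \<bullet> e = x $ i" for x unfolding e_def by (simp add: inner_axis)
  have cj: "c $ j = (if j = i then s else 0)" for j unfolding c_def e_def by (simp add: axis_def)
  have ej: "e $ j = (if j = i then 1 else 0)" for j unfolding e_def by (simp add: axis_def)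
  have hj: "h $ j = (if j = i then s else 1)" for j unfolding h_def by simp
  have int: "F integrable_on cbox a b" for a b
    by (rule integrable_continuous[OF continuous_on_subset[OF cont]]) simp
  have B1: "cbox c (One + c) \<inter> {x. x \<bullet> e \<le> 1} = cbox c One"
  proof (rule set_eqI)
    fix x :: "real^'n"
    show "x \<in> cbox c (One + c) \<inter> {x. x \<bullet> e \<le> 1} \<longleftrightarrow> x \<in> cbox c One"
      unfolding mem_box_cart ie Int_iff mem_Collect_eq
      by (rule box_split_aux[where P="\<lambda>t. t \<le> 1"]) (use s in \<open>auto simp: cj\<close>)
  qed
  have B2: "cbox c (One + c) \<inter> {x. 1 \<le> x \<bullet> e} = cbox (0 + e) (h + e)"
  proof (rule set_eqI)
    fix x :: "real^'n"
    show "x \<in> cbox c (One + c) \<inter> {x. 1 \<le> x \<bullet> e} \<longleftrightarrow> x \<in> cbox (0 + e) (h + e)"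
      unfolding mem_box_cart ie Int_iff mem_Collect_eq
      by (rule box_split_aux[where P="\<lambda>t. 1 \<le> t"]) (use s in \<open>auto simp: cj ej hj\<close>)
  qed
  have Q1: "cbox 0 One \<inter> {x. x \<bullet> e \<le> s} = cbox 0 h"
  proof (rule set_eqI)
    fix x :: "real^'n"
    show "x \<in> cbox 0 One \<inter> {x. x \<bullet> e \<le> s} \<longleftrightarrow> x \<in> cbox 0 h"
      unfolding mem_box_cart ie Int_iff mem_Collect_eq
      by (rule box_split_aux[where P="\<lambda>t. t \<le> s"]) (use s in \<open>auto simp: hj\<close>)
  qed
  have Q2: "cbox 0 One \<inter> {x. s \<le> x \<bullet> e} = cbox c One"
  proof (rule set_eqI)
    fix x :: "real^'n"
    show "x \<in> cbox 0 One \<inter> {x. s \<le> x \<bullet> e} \<longleftrightarrow> x \<in> cbox c One"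
      unfolding mem_box_cart ie Int_iff mem_Collect_eq
      by (rule box_split_aux[where P="\<lambda>t. s \<le> t"]) (use s in \<open>auto simp: cj\<close>)
  qed
  have shiftF: "F \<circ> (+) e = F" using per by (auto simp: e_def add.commute)
  have "((F \<circ> (+) e) has_integral integral (cbox 0 h) F) (cbox 0 h)"
    unfolding shiftF using int by (rule integrable_integral)
  then have Ih: "(F has_integral integral (cbox 0 h) F) (cbox (0 + e) (h + e))"
    by (simp only: has_integral_shift_cbox_iff)
  have I1: "(F has_integral (integral (cbox c One) F + integral (cbox 0 h) F)) (cbox c (One + c))"
  proof (rule has_integral_split[OF _ _ eB, of F _ c "One + c" 1])
    show "(F has_integral integral (cbox c One) F) (cbox c (One + c) \<inter> {x. x \<bullet> e \<le> 1})"
      unfolding B1 using int by (rule integrable_integral)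
    show "(F has_integral integral (cbox 0 h) F) (cbox c (One + c) \<inter> {x. 1 \<le> x \<bullet> e})"
      unfolding B2 by (rule Ih)
  qed
  have I2: "(F has_integral (integral (cbox 0 h) F + integral (cbox c One) F)) (cbox 0 One)"
  proof (rule has_integral_split[OF _ _ eB, of F _ 0 One s])
    show "(F has_integral integral (cbox 0 h) F) (cbox 0 One \<inter> {x. x \<bullet> e \<le> s})"
      unfolding Q1 using int by (rule integrable_integral)
    show "(F has_integral integral (cbox c One) F) (cbox 0 One \<inter> {x. s \<le> x \<bullet> e})"
      unfolding Q2 using int by (rule integrable_integral)
  qed
  have "((F \<circ> (+) c) has_integral (integral (cbox c One) F + integral (cbox 0 h) F)) (cbox 0 One)"
    using I1 by (simp only: has_integral_shift_cbox_iff add_0_left add.commute[of One])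
  moreover have "F \<circ> (+) c = (\<lambda>x. F (x + s *\<^sub>R axis i 1))"
    by (auto simp: o_def c_def e_def add.commute)
  ultimately have "((\<lambda>x. F (x + s *\<^sub>R axis i 1)) has_integral (integral (cbox c One) F + integral (cbox 0 h) F)) (cbox 0 One)"
    by simp
  then show ?thesis using integral_unique[OF I2] integral_unique by (simp add: add.commute)
qed

lemma torus_ibp:
  fixes F dF :: "real^'n \<Rightarrow> real"
  assumes cF: "continuous_on UNIV F" and cdF: "continuous_on UNIV dF"
    and der: "\<And>x. ((\<lambda>s. F (x + s *\<^sub>R axis i 1)) has_real_derivative dF x) (at 0)"
    and per: "\<And>x. F (x + axis i 1) = F x"
    and perd: "\<And>x. dF (x + axis i 1) = dF x"
  shows "integral (cbox 0 One) dF = 0"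
proof -
  define e :: "real^'n" where "e = axis i 1"
  define G where "G s = integral (cbox 0 One) (\<lambda>x. F (x + s *\<^sub>R e))" for s
  have Gc: "G s = integral (cbox 0 One) F" if "s \<in> {0<..<1}" for s
    unfolding G_def e_def using torus_shift[OF cF per, of s] that by simp
  have L: "(G has_real_derivative integral (cbox 0 One) (\<lambda>x. dF (x + (1/2) *\<^sub>R e))) (at (1/2) within {0<..<1})"
    unfolding G_def
  proof (rule leibniz_rule_field_derivative[where fx="\<lambda>s x. dF (x + s *\<^sub>R e)"])
    fix s x assume "s \<in> {0<..<(1::real)}" "x \<in> cbox (0::real^'n) One"
    have "((\<lambda>s. F (x + s *\<^sub>R e)) has_real_derivative dF (x + s *\<^sub>R e)) (at s)"
      by (rule line_deriv_shift[OF der[of "x + s *\<^sub>R e", folded e_def]]) simp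
    then show "((\<lambda>s. F (x + s *\<^sub>R e)) has_real_derivative dF (x + s *\<^sub>R e)) (at s within {0<..<1})"
      by (rule has_field_derivative_at_within)
  next
    fix s :: real
    have "continuous_on (cbox 0 One) (\<lambda>x. F (x + s *\<^sub>R e))"
      by (rule continuous_on_compose2[OF cF]) (auto intro!: continuous_intros)
    then show "(\<lambda>x. F (x + s *\<^sub>R e)) integrable_on cbox 0 One" by (rule integrable_continuous)
  next
    have "continuous_on ({0<..<1} \<times> cbox 0 One) (\<lambda>z. dF (snd z + fst z *\<^sub>R e))"
      by (rule continuous_on_compose2[OF cdF]) (auto intro!: continuous_intros)
    then show "continuous_on ({0<..<1} \<times> cbox 0 One) (\<lambda>(s, x). dF (x + s *\<^sub>R e))"
      by (simp add: case_prod_beta)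
  qed auto
  then have L': "(G has_real_derivative integral (cbox 0 One) (\<lambda>x. dF (x + (1/2) *\<^sub>R e))) (at (1/2))"
    using at_within_open[of "1/2::real" "{0<..<1}"] by simp
  have C: "(G has_real_derivative 0) (at (1/2))"
    by (rule has_field_derivative_transform_within_open[OF DERIV_const[of "integral (cbox 0 One) F"], of "{0<..<1}"])
       (use Gc in auto)
  have "integral (cbox 0 One) (\<lambda>x. dF (x + (1/2) *\<^sub>R e)) = 0" using DERIV_unique[OF L' C] .
  moreover have "integral (cbox 0 One) (\<lambda>x. dF (x + (1/2) *\<^sub>R e)) = integral (cbox 0 One) dF"
    unfolding e_def by (rule torus_shift[OF cdF perd]) auto
  ultimately show ?thesis by simp
qed


definition pcf :: "(real \<times> real) list \<Rightarrow> real \<Rightarrow> real" where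
  "pcf L r = sum_list (map (\<lambda>(a, s). a * r powr s) L)"

definition pcd :: "(real \<times> real) list \<Rightarrow> (real \<times> real) list" where
  "pcd L = map (\<lambda>(a, s). (a * s, s - 1)) L"

lemma pcf_Nil[simp]: "pcf [] r = 0" by (simp add: pcf_def)
lemma pcf_Cons[simp]: "pcf ((a, s) # L) r = a * r powr s + pcf L r" by (simp add: pcf_def)
lemma pcd_Nil[simp]: "pcd [] = []" by (simp add: pcd_def)
lemma pcd_Cons[simp]: "pcd ((a, s) # L) = (a * s, s - 1) # pcd L" by (simp add: pcd_def)

lemma DERIV_pcf: "r > 0 \<Longrightarrow> (pcf L has_real_derivative pcf (pcd L) r) (at r)"
proof (induction L)
  case Nil then show ?case by (simp add: pcf_def[abs_def])
next
  case (Cons p L)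
  obtain a s where p: "p = (a, s)" by force
  have "((\<lambda>r. a * r powr s + pcf L r) has_real_derivative a * (s * r powr (s - 1)) + pcf (pcd L) r) (at r)"
    by (intro DERIV_add DERIV_cmult has_real_derivative_powr Cons)
  then show ?case unfolding p by (simp add: mult.assoc)
qed

lemma smooth_pcf: "smooth_on S R \<Longrightarrow> (\<And>z. z \<in> S \<Longrightarrow> 0 < R z) \<Longrightarrow> smooth_on S (\<lambda>z. pcf L (R z))"
proof (induction L)
  case Nil then show ?case by (simp add: smooth_const smooth_open)
next
  case (Cons p L)
  obtain a s where p: "p = (a, s)" by force
  have "smooth_on S (\<lambda>z. a * R z powr s + pcf L (R z))"
    by (intro smooth_add smooth_cmult smooth_powr Cons) (use Cons in auto)
  then show ?case unfolding p by simp
qed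

lemma smooth_comp_pc:
  assumes "\<And>r. r > 0 \<Longrightarrow> \<phi> r = pcf L r" "smooth_on S R" "\<And>z. z \<in> S \<Longrightarrow> 0 < R z"
  shows "smooth_on S (\<lambda>z. \<phi> (R z))"
  by (rule smooth_cong[OF smooth_pcf[OF assms(2,3)]]) (use assms in auto)

lemma DERIV_comp_pc:
  assumes "\<And>r. r > 0 \<Longrightarrow> \<phi> r = pcf L r" "r > 0"
  shows "(\<phi> has_real_derivative pcf (pcd L) r) (at r)"
  by (rule has_field_derivative_transform_within_open[OF DERIV_pcf[OF assms(2)], of "{0<..}"])
     (use assms in auto)

lemma ddir_comp_pc:
  assumes "\<And>r. r > 0 \<Longrightarrow> \<phi> r = pcf L r" "smooth_on S R" "z \<in> S" "0 < R z"
  shows "ddir v (\<lambda>z. \<phi> (R z)) z = pcf (pcd L) (R z) * ddir v R z"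
  by (rule ddir_chain[OF assms(2,3) DERIV_comp_pc[OF assms(1,4)]])

lemma powr_mult_self: fixes r s :: real shows "r > 0 \<Longrightarrow> r * r powr s = r powr (s + 1)"
proof -
  assume r: "r > 0"
  have "r powr (s + 1) = r powr s * r powr 1" by (rule powr_add)
  also have "r powr 1 = r" using r by simp
  finally show ?thesis by simp
qed

definition Lh :: "real \<Rightarrow> real \<Rightarrow> (real \<times> real) list" where
  "Lh \<epsilon> \<gamma> = [(1, 1), (\<epsilon>, 7/8), (\<epsilon>, \<gamma>)]"

lemma hfun_pc: "r > 0 \<Longrightarrow> hfun \<epsilon> \<gamma> r = pcf (Lh \<epsilon> \<gamma>) r"
  by (simp add: hfun_def Lh_def)

lemma hp_pc: "r > 0 \<Longrightarrow> hp \<epsilon> \<gamma> r = pcf (pcd (Lh \<epsilon> \<gamma>)) r"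
  unfolding hp_def by (rule DERIV_imp_deriv[OF DERIV_comp_pc[OF hfun_pc]])

lemma hp_explicit: "r > 0 \<Longrightarrow> hp \<epsilon> \<gamma> r = 1 + \<epsilon> * (7/8) * r powr (-1/8) + \<epsilon> * \<gamma> * r powr (\<gamma> - 1)"
  by (simp add: hp_pc Lh_def)

definition Lg :: "real \<Rightarrow> real \<Rightarrow> (real \<times> real) list" where
  "Lg \<epsilon> \<gamma> = [(- \<epsilon> / 8, 7/8), (\<epsilon> * (\<gamma> - 1), \<gamma>)]"

lemma gfun_pc: "r > 0 \<Longrightarrow> gfun \<epsilon> \<gamma> r = pcf (Lg \<epsilon> \<gamma>) r"
proof -
  assume r: "r > 0"
  have a: "r * r powr (-1/8) = r powr (7/8)" using powr_mult_self[OF r, of "-1/8"] by simp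
  have b: "r * r powr (\<gamma> - 1) = r powr \<gamma>" using powr_mult_self[OF r, of "\<gamma> - 1"] by simp
  have "gfun \<epsilon> \<gamma> r = r * (1 + \<epsilon> * (7/8) * r powr (-1/8) + \<epsilon> * \<gamma> * r powr (\<gamma> - 1))
          - (r + \<epsilon> * r powr (7/8) + \<epsilon> * r powr \<gamma>)"
    unfolding gfun_def hp_explicit[OF r] hfun_def by simp
  also have "\<dots> = \<epsilon> * (7/8) * (r * r powr (-1/8)) + \<epsilon> * \<gamma> * (r * r powr (\<gamma> - 1))
          - \<epsilon> * r powr (7/8) - \<epsilon> * r powr \<gamma>" by (simp add: algebra_simps)
  also have "\<dots> = pcf (Lg \<epsilon> \<gamma>) r" unfolding a b Lg_def by (simp add: algebra_simps)
  finally show ?thesis .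
qed

lemma sqrt_pc: "r > 0 \<Longrightarrow> sqrt r = pcf [(1, 1/2)] r"
  by (simp add: powr_half_sqrt)

definition LPhi :: "real \<Rightarrow> real \<Rightarrow> (real \<times> real) list" where
  "LPhi \<epsilon> \<gamma> = [(1, 1/2), (7 * \<epsilon> / 6, 3/8), (\<epsilon> * \<gamma> / (2 * \<gamma> - 1), \<gamma> - 1/2)]"

lemma LPhi_deriv:
  assumes r: "r > 0" and g: "\<gamma> > 1"
  shows "pcf (pcd (LPhi \<epsilon> \<gamma>)) r = hp \<epsilon> \<gamma> r / (2 * sqrt r)"
proof -
  have sq: "1 / sqrt r = r powr (-1/2)" using r by (simp add: powr_minus_divide powr_half_sqrt)
  have e1: "r powr (-1/8) * r powr (-1/2) = r powr (-5/8)" by (simp add: powr_add[symmetric])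
  have e2: "r powr (\<gamma> - 1) * r powr (-1/2) = r powr (\<gamma> - 3/2)" by (simp add: powr_add[symmetric])
  have g2: "2 * \<gamma> - 1 \<noteq> 0" using g by simp
  have "hp \<epsilon> \<gamma> r / (2 * sqrt r) = (1 + \<epsilon> * (7/8) * r powr (-1/8) + \<epsilon> * \<gamma> * r powr (\<gamma> - 1)) * (1 / sqrt r) / 2"
    unfolding hp_explicit[OF r] by simp
  also have "\<dots> = (r powr (-1/2) + \<epsilon> * (7/8) * (r powr (-1/8) * r powr (-1/2)) + \<epsilon> * \<gamma> * (r powr (\<gamma> - 1) * r powr (-1/2))) / 2"
    unfolding sq by (simp add: algebra_simps)
  also have "\<dots> = (r powr (-1/2) + \<epsilon> * (7/8) * r powr (-5/8) + \<epsilon> * \<gamma> * r powr (\<gamma> - 3/2)) / 2"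
    unfolding e1 e2 ..
  also have "\<dots> = pcf (pcd (LPhi \<epsilon> \<gamma>)) r"
    unfolding LPhi_def using g2 by (simp add: field_simps)
  finally show ?thesis by simp
qed

definition PT' :: "real \<Rightarrow> (real \<times> real) list \<Rightarrow> (real \<times> real) list" where
  "PT' c L = map (\<lambda>(a, s). (c * (a / (s - 1)), s)) L"

definition PTp :: "real \<Rightarrow> (real \<times> real) list \<Rightarrow> (real \<times> real) list" where
  "PTp c L = map (\<lambda>(a, s). (c * a, s)) L"

lemma PT'_sum: "c * sum_list (map (\<lambda>(a, s). a / (s - 1) * r powr s) L) = pcf (PT' c L) r"
  by (induction L) (auto simp: PT'_def algebra_simps)

lemma PTp_sum: "c * sum_list (map (\<lambda>(a, s). a * r powr s) L) = pcf (PTp c L) r"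
  by (induction L) (auto simp: PTp_def algebra_simps)

lemma QP_list:
  assumes "\<forall>(a, s)\<in>set L. s \<noteq> 1" "r > 0"
  shows "r * pcf (pcd (pcd (PT' c L))) r = pcf (pcd (PTp c L)) r"
  using assms(1)
proof (induction L)
  case Nil then show ?case by (simp add: PT'_def PTp_def)
next
  case (Cons p L)
  obtain a s where p: "p = (a, s)" by force
  have s: "s \<noteq> 1" using Cons.prems p by auto
  have IH: "r * pcf (pcd (pcd (PT' c L))) r = pcf (pcd (PTp c L)) r" using Cons by auto
  have e: "r * r powr (s - 1 - 1) = r powr (s - 1)" using powr_mult_self[OF assms(2), of "s - 1 - 1"] by simp
  have "r * (c * (a / (s - 1)) * s * (s - 1) * r powr (s - 1 - 1)) = c * a * s * (r * r powr (s - 1 - 1))"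
    using s by (simp add: field_simps)
  then have "r * (c * (a / (s - 1)) * s * (s - 1) * r powr (s - 1 - 1)) = c * a * s * r powr (s - 1)"
    unfolding e .
  then show ?case using IH by (simp add: p PT'_def PTp_def algebra_simps)
qed

definition LF :: "real \<Rightarrow> real \<Rightarrow> real \<Rightarrow> real \<Rightarrow> (real \<times> real) list" where
  "LF \<nu> \<kappa> \<epsilon> \<gamma> = (1 / (\<gamma> - 1), \<gamma>) # PT' (mu \<nu> \<kappa> * lam \<epsilon>) (pterms \<epsilon> \<gamma>)"

definition LP :: "real \<Rightarrow> real \<Rightarrow> real \<Rightarrow> real \<Rightarrow> (real \<times> real) list" where
  "LP \<nu> \<kappa> \<epsilon> \<gamma> = (1, \<gamma>) # PTp (mu \<nu> \<kappa> * lam \<epsilon>) (pterms \<epsilon> \<gamma>)"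

lemma Fall_pc: "r powr \<gamma> / (\<gamma> - 1) + ffun \<nu> \<kappa> \<epsilon> \<gamma> r = pcf (LF \<nu> \<kappa> \<epsilon> \<gamma>) r"
  unfolding ffun_def LF_def using PT'_sum[of "mu \<nu> \<kappa> * lam \<epsilon>" r "pterms \<epsilon> \<gamma>"] by simp

lemma P_pc: "r powr \<gamma> + pfun \<nu> \<kappa> \<epsilon> \<gamma> r = pcf (LP \<nu> \<kappa> \<epsilon> \<gamma>) r"
  unfolding pfun_def LP_def using PTp_sum[of "mu \<nu> \<kappa> * lam \<epsilon>" r "pterms \<epsilon> \<gamma>"] by simp

lemma QP:
  assumes "\<forall>(a, s)\<in>set (pterms \<epsilon> \<gamma>). s \<noteq> 1" "r > 0" "\<gamma> > 1"
  shows "r * pcf (pcd (pcd (LF \<nu> \<kappa> \<epsilon> \<gamma>))) r = pcf (pcd (LP \<nu> \<kappa> \<epsilon> \<gamma>)) r"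
proof -
  have e: "r * r powr (\<gamma> - 1 - 1) = r powr (\<gamma> - 1)" using powr_mult_self[OF assms(2), of "\<gamma> - 1 - 1"] by simp
  have "r * (1 / (\<gamma> - 1) * \<gamma> * (\<gamma> - 1) * r powr (\<gamma> - 1 - 1)) = \<gamma> * r powr (\<gamma> - 1)"
    using e assms(3) by (simp add: field_simps)
  then show ?thesis using QP_list[OF assms(1,2)] by (simp add: LF_def LP_def algebra_simps)
qed

lemma pterms_ne1:
  assumes "0 < \<epsilon>" "\<epsilon> < 1/2" "\<epsilon>\<^sup>2 * (\<gamma> - 1) < 1" "1 < \<gamma>"
  shows "\<forall>(a, s)\<in>set (pterms \<epsilon> \<gamma>). s \<noteq> 1"
proof -
  have "\<epsilon>\<^sup>2 < (1/2)\<^sup>2" using assms by (intro power_strict_mono) auto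
  then have e2: "\<epsilon>\<^sup>2 < 1/4" by (simp add: power2_eq_square)
  have pos: "\<epsilon>\<^sup>2 > 0" using assms by simp
  have big: "1 / \<epsilon>\<^sup>2 > 4" using e2 pos by (simp add: field_simps)
  have g: "1 / \<epsilon>\<^sup>2 > \<gamma> - 1" using assms(3) pos by (simp add: field_simps)
  show ?thesis unfolding pterms_def using big g assms(4)
    by (auto simp: field_simps)
qed


lemma dx_conv: "dx i (\<lambda>y. G (t, y)) x = ddir (0, axis i 1) G (t, x)"
  unfolding dx_def ddir_def by simp

lemma dtime_conv: "dtime (\<lambda>s y. G (s, y)) t x = ddir (1, 0) G (t, x)"
proof -
  have "deriv (\<lambda>s. G (s + t, x)) 0 = deriv (\<lambda>s. G (s, x)) t"
    unfolding deriv_def using DERIV_shift[of "\<lambda>s. G (s, x)" _ 0 t] by simp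
  then show ?thesis unfolding dtime_def ddir_def by (simp add: add.commute)
qed

lemma ddir_divc: "smooth_on S F \<Longrightarrow> x \<in> S \<Longrightarrow> ddir v (\<lambda>z. F z / c) x = ddir v F x / c"
  using ddir_cmult[of S F x v "1/c"] by simp

lemma smooth_divc: "smooth_on S F \<Longrightarrow> smooth_on S (\<lambda>z. F z / c)"
  using smooth_cmult[of S F "1/c"] by simp

lemma smooth_if: "(P \<Longrightarrow> smooth_on S F) \<Longrightarrow> open S \<Longrightarrow> smooth_on S (\<lambda>z. if P then F z else 0)"
  by (cases P) (auto simp: smooth_const)

lemma ddir_if: "ddir v (\<lambda>z. if P then F z else 0) x = (if P then ddir v F x else 0)"
  by (cases P) (auto simp: ddir_const)

lemma ddir_square: "smooth_on S F \<Longrightarrow> x \<in> S \<Longrightarrow> ddir v (\<lambda>z. F z * F z) x = 2 * F x * ddir v F x"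
  using ddir_mult[of S F F x v] by simp

locale solA =
  fixes \<nu> \<kappa> \<gamma> \<epsilon> T :: real and \<rho> :: "real \<Rightarrow> real^'n::finite \<Rightarrow> real"
    and u :: "real \<Rightarrow> real^'n \<Rightarrow> real^'n"
  assumes sol: "is_smooth_solution_A \<nu> \<kappa> \<gamma> \<epsilon> T \<rho> u"
    and eps: "0 < \<epsilon>" "\<epsilon> < 1/2" "\<epsilon>\<^sup>2 * (\<gamma> - 1) < 1"
    and gam: "1 < \<gamma>"
begin

definition "SS = {0<..<T} \<times> (UNIV :: (real^'n) set)"
definition "RR = (\<lambda>(t, x). \<rho> t x)"
definition "UU j = (\<lambda>(t, x). u t x $ j)"
definition "Et = ((1::real), (0::real^'n))"
definition "Ei i = ((0::real), (axis i 1 :: real^'n))"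

lemma RR_app[simp]: "RR (t, x) = \<rho> t x" by (simp add: RR_def)
lemma UU_app[simp]: "UU j (t, x) = u t x $ j" by (simp add: UU_def)

lemma openSS: "open SS" unfolding SS_def by (intro open_Times) auto

lemma smooth_RR[simp]: "smooth_on SS RR"
  using sol unfolding is_smooth_solution_A_def SS_def RR_def by blast

lemma smooth_UU[simp]: "smooth_on SS (UU j)"
  using sol unfolding is_smooth_solution_A_def SS_def UU_def by blast

lemma RR_pos: "z \<in> SS \<Longrightarrow> 0 < RR z"
  using sol unfolding is_smooth_solution_A_def SS_def RR_def by auto

lemma smooth_const'[simp]: "smooth_on SS (\<lambda>_. c)" using smooth_const[OF openSS] .


lemmas sm_rules = smooth_add smooth_mult smooth_diff smooth_minus smooth_divc smooth_ddir
declare sm_rules[simp]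
lemmas ddir_add_S = ddir_add[where S=SS]
lemmas ddir_mult_S = ddir_mult[where S=SS]
lemmas ddir_diff_S = ddir_diff[where S=SS]
lemmas ddir_minus_S = ddir_minus[where S=SS]
lemmas ddir_divc_S = ddir_divc[where S=SS]
lemmas ddir_square_S = ddir_square[where S=SS]

lemma smooth_sum_S[simp]: fixes f :: "'i::finite \<Rightarrow> real \<times> (real^'n) \<Rightarrow> real"
  shows "(\<And>i. smooth_on SS (f i)) \<Longrightarrow> smooth_on SS (\<lambda>z. \<Sum>i\<in>UNIV. f i z)"
  by (rule smooth_sum[OF _ openSS]) auto

lemma ddir_sum_S: fixes f :: "'i::finite \<Rightarrow> real \<times> (real^'n) \<Rightarrow> real"
  shows "(\<And>i. smooth_on SS (f i)) \<Longrightarrow> x \<in> SS \<Longrightarrow>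
    ddir v (\<lambda>z. \<Sum>i\<in>UNIV. f i z) x = (\<Sum>i\<in>UNIV. ddir v (f i) x)"
  by (rule ddir_sum[OF _ openSS]) auto

definition "Sq = (\<lambda>z. sqrt (RR z))"
definition "hpR = (\<lambda>z. hp \<epsilon> \<gamma> (RR z))"
definition "Psi i = (\<lambda>z. hpR z * ddir (Ei i) Sq z)"
definition "DivPsi = (\<lambda>z. \<Sum>i\<in>UNIV. ddir (Ei i) (Psi i) z)"
definition "WW = (\<lambda>z. hpR z * DivPsi z / Sq z)"
definition "Dm i j = (\<lambda>z. (ddir (Ei j) (UU i) z + ddir (Ei i) (UU j) z) / 2)"
definition "Dv = (\<lambda>z. \<Sum>i\<in>UNIV. ddir (Ei i) (UU i) z)"
definition "HR = (\<lambda>z. hfun \<epsilon> \<gamma> (RR z))"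
definition "GR = (\<lambda>z. gfun \<epsilon> \<gamma> (RR z))"
definition "Sig i j = (\<lambda>z. HR z * Dm i j z + (if i = j then GR z * Dv z else 0))"
definition "Pp = (\<lambda>z. RR z powr \<gamma> + pfun \<nu> \<kappa> \<epsilon> \<gamma> (RR z))"
definition "Fa = (\<lambda>z. RR z powr \<gamma> / (\<gamma> - 1) + ffun \<nu> \<kappa> \<epsilon> \<gamma> (RR z))"
definition "Qf = (\<lambda>z. pcf (pcd (LF \<nu> \<kappa> \<epsilon> \<gamma>)) (RR z))"
definition "Phi = (\<lambda>z. pcf (LPhi \<epsilon> \<gamma>) (RR z))"
definition "Phit = ddir Et Phi"
definition "Ep = (\<lambda>z. RR z * (\<Sum>j\<in>UNIV. UU j z * UU j z) / 2 + Fa z + 2 * \<kappa>\<^sup>2 * (\<Sum>i\<in>UNIV. Psi i z * Psi i z))"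
definition "Flux i = (\<lambda>z. - (RR z * UU i z * (\<Sum>j\<in>UNIV. UU j z * UU j z) / 2)
   + 2 * \<nu> * (\<Sum>j\<in>UNIV. Sig i j z * UU j z) - Qf z * RR z * UU i z
   + 2 * \<kappa>\<^sup>2 * (RR z * UU i z * WW z) + 4 * \<kappa>\<^sup>2 * (Psi i z * Phit z))"

lemma smooth_Sq[simp]: "smooth_on SS Sq"
  unfolding Sq_def by (rule smooth_sqrt[OF smooth_RR RR_pos])

lemma Sq_pos: "z \<in> SS \<Longrightarrow> 0 < Sq z" unfolding Sq_def using RR_pos by simp

lemma smooth_hpR[simp]: "smooth_on SS hpR"
  unfolding hpR_def by (rule smooth_comp_pc[OF hp_pc smooth_RR RR_pos])

lemma smooth_HR[simp]: "smooth_on SS HR"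
  unfolding HR_def by (rule smooth_comp_pc[OF hfun_pc smooth_RR RR_pos])

lemma smooth_GR[simp]: "smooth_on SS GR"
  unfolding GR_def by (rule smooth_comp_pc[OF gfun_pc smooth_RR RR_pos])

lemma smooth_Psi[simp]: "smooth_on SS (Psi i)"
  unfolding Psi_def by (intro sm_rules) simp_all

lemma smooth_DivPsi[simp]: "smooth_on SS DivPsi"
  unfolding DivPsi_def by simp

lemma smooth_WW[simp]: "smooth_on SS WW"
  unfolding WW_def by (rule smooth_divide) (auto simp: Sq_pos)

lemma smooth_Dm[simp]: "smooth_on SS (Dm i j)"
  unfolding Dm_def by (intro sm_rules) simp_all

lemma smooth_Dv[simp]: "smooth_on SS Dv"
  unfolding Dv_def by simp

lemma smooth_Sig[simp]: "smooth_on SS (Sig i j)"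
  unfolding Sig_def by (intro sm_rules smooth_if openSS) simp_all

lemma smooth_Pp[simp]: "smooth_on SS Pp"
  unfolding Pp_def by (rule smooth_comp_pc[OF P_pc smooth_RR RR_pos])

lemma smooth_Fa[simp]: "smooth_on SS Fa"
  unfolding Fa_def by (rule smooth_comp_pc[OF Fall_pc smooth_RR RR_pos])

lemma smooth_Qf[simp]: "smooth_on SS Qf"
  unfolding Qf_def by (rule smooth_pcf[OF smooth_RR RR_pos])

lemma smooth_Phi[simp]: "smooth_on SS Phi"
  unfolding Phi_def by (rule smooth_pcf[OF smooth_RR RR_pos])

lemma smooth_Phit[simp]: "smooth_on SS Phit"
  unfolding Phit_def by simp

lemma smooth_Flux[simp]: "smooth_on SS (Flux i)"
  unfolding Flux_def by (intro sm_rules smooth_sum_S) simp_all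

lemma smooth_Ep[simp]: "smooth_on SS Ep"
  unfolding Ep_def by (intro sm_rules smooth_sum_S) simp_all


lemma ddir_Fa: "z \<in> SS \<Longrightarrow> ddir v Fa z = Qf z * ddir v RR z"
  unfolding Fa_def Qf_def by (rule ddir_comp_pc[OF Fall_pc smooth_RR _ RR_pos])

lemma ddir_Qf: "z \<in> SS \<Longrightarrow> ddir v Qf z = pcf (pcd (pcd (LF \<nu> \<kappa> \<epsilon> \<gamma>))) (RR z) * ddir v RR z"
  unfolding Qf_def by (rule ddir_comp_pc[where L="pcd (LF \<nu> \<kappa> \<epsilon> \<gamma>)", OF refl smooth_RR _ RR_pos])

lemma ddir_Pp: "z \<in> SS \<Longrightarrow> ddir v Pp z = pcf (pcd (LP \<nu> \<kappa> \<epsilon> \<gamma>)) (RR z) * ddir v RR z"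
  unfolding Pp_def by (rule ddir_comp_pc[OF P_pc smooth_RR _ RR_pos])

lemma ddir_Phi: "z \<in> SS \<Longrightarrow> ddir v Phi z = hp \<epsilon> \<gamma> (RR z) / (2 * sqrt (RR z)) * ddir v RR z"
  unfolding Phi_def
  using ddir_comp_pc[where L="LPhi \<epsilon> \<gamma>", OF refl smooth_RR _ RR_pos, of z v]
    LPhi_deriv[OF RR_pos gam] by simp

lemma ddir_Sq: "z \<in> SS \<Longrightarrow> ddir v Sq z = 1 / (2 * sqrt (RR z)) * ddir v RR z"
proof -
  assume z: "z \<in> SS"
  have r: "RR z > 0" using RR_pos[OF z] .
  have "ddir v Sq z = pcf (pcd [(1, 1/2)]) (RR z) * ddir v RR z"
    unfolding Sq_def by (rule ddir_comp_pc[OF sqrt_pc smooth_RR z r])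
  also have "pcf (pcd [(1, 1/2)]) (RR z) = 1 / (2 * sqrt (RR z))"
    using r by (simp add: powr_minus_divide powr_half_sqrt)
  finally show ?thesis .
qed

lemma Psi_eq: "z \<in> SS \<Longrightarrow> Psi i z = ddir (Ei i) Phi z"
  unfolding Psi_def hpR_def by (simp add: ddir_Phi ddir_Sq)

lemma ddir_Psi_t: "z \<in> SS \<Longrightarrow> ddir Et (Psi i) z = ddir (Ei i) Phit z"
proof -
  assume z: "z \<in> SS"
  have "ddir Et (Psi i) z = ddir Et (ddir (Ei i) Phi) z"
    by (rule ddir_cong[OF openSS z]) (simp add: Psi_eq)
  also have "\<dots> = ddir (Ei i) (ddir Et Phi) z"
    by (rule ddir_swap[OF smooth_Phi z])
  finally show ?thesis unfolding Phit_def .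
qed

lemma Phit_eq: "z \<in> SS \<Longrightarrow> Phit z = hp \<epsilon> \<gamma> (RR z) / (2 * sqrt (RR z)) * ddir Et RR z"
  unfolding Phit_def by (rule ddir_Phi)

lemma conv_dxsqrt: "dx i (\<lambda>w. sqrt (\<rho> t w)) y = ddir (Ei i) Sq (t, y)"
  using dx_conv[of i Sq t y] by (simp add: Sq_def Ei_def)

lemma conv_Psi: "dx i (\<lambda>z. hp \<epsilon> \<gamma> (\<rho> t z) * dx i (\<lambda>w. sqrt (\<rho> t w)) z) y = ddir (Ei i) (Psi i) (t, y)"
  using dx_conv[of i "Psi i" t y] by (simp add: Psi_def hpR_def Ei_def conv_dxsqrt)

lemma conv_W: "dx j (\<lambda>y. hp \<epsilon> \<gamma> (\<rho> t y) *
             (\<Sum>i\<in>UNIV. dx i (\<lambda>z. hp \<epsilon> \<gamma> (\<rho> t z) * dx i (\<lambda>w. sqrt (\<rho> t w)) z) y)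
             / sqrt (\<rho> t y)) x = ddir (Ei j) WW (t, x)"
  using dx_conv[of j WW t x] by (simp add: WW_def hpR_def DivPsi_def Sq_def Ei_def conv_Psi)

lemma conv_UU: "dx i (\<lambda>y. u t y $ j) y = ddir (Ei i) (UU j) (t, y)"
  using dx_conv[of i "UU j" t y] by (simp add: Ei_def)

lemma conv_Dsym: "Dsym (u t) i j y = Dm i j (t, y)"
  by (simp add: Dsym_def Dm_def conv_UU)

lemma conv_divg: "divg (u t) y = Dv (t, y)"
  by (simp add: divg_def Dv_def conv_UU)

lemma conv_Sig: "dx i (\<lambda>y. hfun \<epsilon> \<gamma> (\<rho> t y) * Dsym (u t) i j y
              + (if i = j then gfun \<epsilon> \<gamma> (\<rho> t y) * divg (u t) y else 0)) x = ddir (Ei i) (Sig i j) (t, x)"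
  using dx_conv[of i "Sig i j" t x] by (simp add: Sig_def HR_def GR_def Ei_def conv_Dsym conv_divg cong: if_cong)

lemma conv_P: "dx j (\<lambda>y. \<rho> t y powr \<gamma> + pfun \<nu> \<kappa> \<epsilon> \<gamma> (\<rho> t y)) x = ddir (Ei j) Pp (t, x)"
  using dx_conv[of j Pp t x] by (simp add: Pp_def Ei_def)

lemma conv_RU: "dx i (\<lambda>y. \<rho> t y * u t y $ i) x = ddir (Ei i) (\<lambda>z. RR z * UU i z) (t, x)"
  using dx_conv[of i "\<lambda>z. RR z * UU i z" t x] by (simp add: Ei_def)

lemma conv_RUU: "dx i (\<lambda>y. \<rho> t y * u t y $ i * u t y $ j) x = ddir (Ei i) (\<lambda>z. RR z * UU i z * UU j z) (t, x)"
  using dx_conv[of i "\<lambda>z. RR z * UU i z * UU j z" t x] by (simp add: Ei_def)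

lemma conv_rt: "dtime \<rho> t x = ddir Et RR (t, x)"
  using dtime_conv[of RR t x] by (simp add: Et_def)

lemma conv_RUt: "dtime (\<lambda>s y. \<rho> s y * u s y $ j) t x = ddir Et (\<lambda>z. RR z * UU j z) (t, x)"
  using dtime_conv[of "\<lambda>z. RR z * UU j z" t x] by (simp add: Et_def)

lemma SS_mem: "z \<in> SS \<longleftrightarrow> fst z \<in> {0<..<T}" unfolding SS_def by (cases z) auto

lemma eqC: "z \<in> SS \<Longrightarrow> ddir Et RR z + (\<Sum>i\<in>UNIV. ddir (Ei i) (\<lambda>z. RR z * UU i z) z) = 0"
proof -
  assume z: "z \<in> SS"
  obtain t x where zt: "z = (t, x)" by force
  have t: "t \<in> {0<..<T}" using z zt SS_mem by auto
  have "dtime \<rho> t x + (\<Sum>i\<in>UNIV. dx i (\<lambda>y. \<rho> t y * u t y $ i) x) = 0"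
    using sol t unfolding is_smooth_solution_A_def by blast
  then show ?thesis unfolding zt conv_rt conv_RU .
qed

lemma eqM: "z \<in> SS \<Longrightarrow>
   ddir Et (\<lambda>z. RR z * UU j z) z + (\<Sum>i\<in>UNIV. ddir (Ei i) (\<lambda>z. RR z * UU i z * UU j z) z)
   - 2 * \<nu> * (\<Sum>i\<in>UNIV. ddir (Ei i) (Sig i j) z) + ddir (Ei j) Pp z + ptil \<epsilon> (RR z) * UU j z
   = \<kappa>\<^sup>2 * (2 * RR z * ddir (Ei j) WW z)"
proof -
  assume z: "z \<in> SS"
  obtain t x where zt: "z = (t, x)" by force
  have t: "t \<in> {0<..<T}" using z zt SS_mem by auto
  have "dtime (\<lambda>s y. \<rho> s y * u s y $ j) t x
       + (\<Sum>i\<in>UNIV. dx i (\<lambda>y. \<rho> t y * u t y $ i * u t y $ j) x)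
       - 2 * \<nu> * (\<Sum>i\<in>UNIV. dx i (\<lambda>y. hfun \<epsilon> \<gamma> (\<rho> t y) * Dsym (u t) i j y
              + (if i = j then gfun \<epsilon> \<gamma> (\<rho> t y) * divg (u t) y else 0)) x)
       + dx j (\<lambda>y. \<rho> t y powr \<gamma> + pfun \<nu> \<kappa> \<epsilon> \<gamma> (\<rho> t y)) x
       + ptil \<epsilon> (\<rho> t x) * u t x $ j
       = \<kappa>\<^sup>2 * (2 * \<rho> t x * dx j (\<lambda>y. hp \<epsilon> \<gamma> (\<rho> t y) *
             (\<Sum>i\<in>UNIV. dx i (\<lambda>z. hp \<epsilon> \<gamma> (\<rho> t z) * dx i (\<lambda>w. sqrt (\<rho> t w)) z) y)
             / sqrt (\<rho> t y)) x)"
    using sol t unfolding is_smooth_solution_A_def by blast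
  then show ?thesis unfolding zt conv_RUt conv_RUU conv_Sig conv_P conv_W by simp
qed

end


lemma final_alg:
  fixes uu ut ri dw ps dps dph :: "'i::finite \<Rightarrow> real" and ud dSg Sg :: "'i \<Rightarrow> 'i \<Rightarrow> real"
    and dF :: "'i \<Rightarrow> real"
  assumes hEp: "dEp = (rt * (\<Sum>j\<in>UNIV. uu j * uu j) + r * (\<Sum>j\<in>UNIV. 2 * (uu j * ut j))) / 2 + q * rt
        + 2 * k2 * (\<Sum>i\<in>UNIV. 2 * (ps i * dph i))"
    and hF: "\<And>i. dF i = 2 * nu * (\<Sum>j\<in>UNIV. dSg i j * uu j + Sg i j * ud i j) -
     ((ri i * uu i + r * ud i i) * (\<Sum>j\<in>UNIV. uu j * uu j) +
      r * uu i * (\<Sum>j\<in>UNIV. 2 * (uu j * ud i j))) / 2 -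
     ((q2 * ri i * r + q * ri i) * uu i + q * r * ud i i) +
     2 * k2 * ((ri i * uu i + r * ud i i) * w + r * uu i * dw i) +
     4 * k2 * (dps i * ph + ps i * dph i)"
    and hC: "rt + (\<Sum>i\<in>UNIV. ri i * uu i + r * ud i i) = 0"
    and hM: "\<And>j. rt * uu j + r * ut j +
      (\<Sum>i\<in>UNIV. (ri i * uu i + r * ud i i) * uu j + r * uu i * ud i j) -
      2 * nu * (\<Sum>i\<in>UNIV. dSg i j) + p1 * ri j + pt * uu j = k2 * (2 * r * dw j)"
    and hQ: "r * q2 = p1"
    and hW: "ph * (\<Sum>i\<in>UNIV. dps i) = rt * w / 2"
    and hD: "(\<Sum>i\<in>UNIV. \<Sum>j\<in>UNIV. Sg i j * ud i j) = D"
  shows "dEp = (\<Sum>i\<in>UNIV. dF i) - 2 * nu * D - pt * (\<Sum>j\<in>UNIV. uu j * uu j)"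
proof -
  define X1 where "X1 = (\<Sum>j\<in>UNIV. uu j * uu j)"
  define A2 where "A2 = (\<Sum>j\<in>UNIV. uu j * ut j)"
  define A3 where "A3 = (\<Sum>i\<in>UNIV. uu i * (\<Sum>j\<in>UNIV. uu j * ud i j))"
  define A4 where "A4 = (\<Sum>i\<in>UNIV. \<Sum>j\<in>UNIV. dSg i j * uu j)"
  define A6 where "A6 = (\<Sum>i\<in>UNIV. ri i * uu i)"
  define A7 where "A7 = (\<Sum>i\<in>UNIV. uu i * dw i)"
  define A8 where "A8 = (\<Sum>i\<in>UNIV. ps i * dph i)"
  define A9 where "A9 = (\<Sum>i\<in>UNIV. dps i)"
  define Cs where "Cs = (\<Sum>i\<in>UNIV. ri i * uu i + r * ud i i)"
  have s2: "(\<Sum>j\<in>UNIV. 2 * (f j)) = 2 * (\<Sum>j\<in>UNIV. f j)" for f :: "'i \<Rightarrow> real"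
    by (simp add: sum_distrib_left)
  have Ep': "dEp = (rt * X1 + 2 * r * A2) / 2 + q * rt + 4 * k2 * A8"
    unfolding hEp X1_def A2_def A8_def s2 by simp
  have hF': "dF i = 2 * nu * (\<Sum>j\<in>UNIV. dSg i j * uu j) + 2 * nu * (\<Sum>j\<in>UNIV. Sg i j * ud i j)
     + (- X1 / 2) * (ri i * uu i + r * ud i i) + (- r) * (uu i * (\<Sum>j\<in>UNIV. uu j * ud i j))
     + (- q2 * r) * (ri i * uu i) + (- q) * (ri i * uu i + r * ud i i)
     + (2 * k2 * w) * (ri i * uu i + r * ud i i) + (2 * k2 * r) * (uu i * dw i)
     + (4 * k2 * ph) * dps i + (4 * k2) * (ps i * dph i)" for i
    unfolding hF X1_def s2 sum.distrib by (simp add: field_simps)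
  have sF: "(\<Sum>i\<in>UNIV. dF i) = 2 * nu * A4 + 2 * nu * D + (- X1 / 2) * Cs + (- r) * A3
     + (- q2 * r) * A6 + (- q) * Cs + (2 * k2 * w) * Cs + (2 * k2 * r) * A7 + (4 * k2 * ph) * A9 + (4 * k2) * A8"
    unfolding hF' sum.distrib sum_distrib_left[symmetric] A4_def hD[symmetric] Cs_def A3_def A6_def A7_def A9_def A8_def
    by simp
  have hM': "rt * (uu j * uu j) + r * (uu j * ut j) + Cs * (uu j * uu j) + r * (uu j * (\<Sum>i\<in>UNIV. uu i * ud i j))
      - 2 * nu * (\<Sum>i\<in>UNIV. dSg i j * uu j) + p1 * (ri j * uu j) + pt * (uu j * uu j)
      = 2 * k2 * r * (uu j * dw j)" for j
  proof -
    have e1: "(\<Sum>i\<in>UNIV. (ri i * uu i + r * ud i i) * uu j + r * uu i * ud i j)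
        = Cs * uu j + r * (\<Sum>i\<in>UNIV. uu i * ud i j)"
    proof -
      have "(\<Sum>i\<in>UNIV. (ri i * uu i + r * ud i i) * uu j + r * uu i * ud i j)
          = (\<Sum>i\<in>UNIV. (ri i * uu i + r * ud i i) * uu j) + (\<Sum>i\<in>UNIV. r * (uu i * ud i j))"
        by (simp add: sum.distrib mult.assoc)
      also have "(\<Sum>i\<in>UNIV. (ri i * uu i + r * ud i i) * uu j) = Cs * uu j"
        unfolding Cs_def by (rule sum_distrib_right[symmetric])
      also have "(\<Sum>i\<in>UNIV. r * (uu i * ud i j)) = r * (\<Sum>i\<in>UNIV. uu i * ud i j)"
        by (rule sum_distrib_left[symmetric])
      finally show ?thesis .
    qed
    have e2: "(\<Sum>i\<in>UNIV. dSg i j * uu j) = (\<Sum>i\<in>UNIV. dSg i j) * uu j"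
      by (simp add: sum_distrib_right)
    have "uu j * (rt * uu j + r * ut j + (Cs * uu j + r * (\<Sum>i\<in>UNIV. uu i * ud i j))
      - 2 * nu * (\<Sum>i\<in>UNIV. dSg i j) + p1 * ri j + pt * uu j) = uu j * (k2 * (2 * r * dw j))"
      using hM[of j] unfolding e1 by simp
    then show ?thesis unfolding e2 by (simp add: algebra_simps)
  qed
  have sw3: "(\<Sum>j\<in>UNIV. uu j * (\<Sum>i\<in>UNIV. uu i * ud i j)) = A3"
    unfolding A3_def sum_distrib_left
    by (subst sum.swap) (simp add: algebra_simps)
  have sw4: "(\<Sum>j\<in>UNIV. \<Sum>i\<in>UNIV. dSg i j * uu j) = A4"
    unfolding A4_def by (rule sum.swap)
  have sM: "rt * X1 + r * A2 + Cs * X1 + r * A3 - 2 * nu * A4 + p1 * A6 + pt * X1 = 2 * k2 * r * A7"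
  proof -
    have "(\<Sum>j\<in>UNIV. rt * (uu j * uu j) + r * (uu j * ut j) + Cs * (uu j * uu j) + r * (uu j * (\<Sum>i\<in>UNIV. uu i * ud i j))
      - 2 * nu * (\<Sum>i\<in>UNIV. dSg i j * uu j) + p1 * (ri j * uu j) + pt * (uu j * uu j))
      = (\<Sum>j\<in>UNIV. 2 * k2 * r * (uu j * dw j))"
      using hM' by simp
    then show ?thesis
      unfolding sum.distrib sum_subtractf sum_distrib_left[symmetric] sw3 sw4
        X1_def[symmetric] A2_def[symmetric] A6_def[symmetric] A7_def[symmetric] by (simp add: mult.commute)
  qed
  have C': "Cs = - rt" using hC unfolding Cs_def by simp
  have W': "ph * A9 = rt * w / 2" using hW unfolding A9_def .
  have L: "dEp = (rt * X1) / 2 + r * A2 + q * rt + 4 * (k2 * A8)"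
    unfolding Ep' by (simp add: algebra_simps)
  have Rr: "(\<Sum>i\<in>UNIV. dF i) - 2 * nu * D - pt * X1 = 2 * (nu * A4) + (rt * X1) / 2 - r * A3
     - q2 * r * A6 + q * rt - 2 * (k2 * w * rt) + 2 * (k2 * r * A7) + 4 * (k2 * ph * A9) + 4 * (k2 * A8) - pt * X1"
    unfolding sF C' by (simp add: algebra_simps)
  have M2: "r * A2 + r * A3 - 2 * (nu * A4) + p1 * A6 + pt * X1 = 2 * (k2 * r * A7)"
    using sM unfolding C' by (simp add: algebra_simps)
  have Q2: "q2 * r * A6 = p1 * A6" using hQ by (simp add: mult.commute)
  have W2: "k2 * w * rt = 2 * (k2 * ph * A9)"
  proof -
    have "k2 * w * rt = k2 * (rt * w)" by (simp add: algebra_simps)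
    also have "\<dots> = k2 * (2 * (ph * A9))" using W' by simp
    finally show ?thesis by (simp add: algebra_simps)
  qed
  show ?thesis unfolding X1_def[symmetric] using L Rr M2 Q2 W2 by linarith
qed

lemma diss_alg:
  fixes ud :: "'i::finite \<Rightarrow> 'i \<Rightarrow> real"
  shows "(\<Sum>i\<in>UNIV. \<Sum>j\<in>UNIV. (H * ((ud j i + ud i j) / 2) + (if i = j then G * (\<Sum>k\<in>UNIV. ud k k) else 0)) * ud i j)
    = H * (\<Sum>i\<in>UNIV. \<Sum>j\<in>UNIV. ((ud j i + ud i j) / 2) * ((ud j i + ud i j) / 2))
      + G * ((\<Sum>k\<in>UNIV. ud k k) * (\<Sum>k\<in>UNIV. ud k k))"
proof -
  define Dm where "Dm i j = (ud j i + ud i j) / 2" for i j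
  have sym: "Dm i j = Dm j i" for i j unfolding Dm_def by simp
  have a: "(\<Sum>i\<in>UNIV. \<Sum>j\<in>UNIV. Dm i j * ud j i) = (\<Sum>i\<in>UNIV. \<Sum>j\<in>UNIV. Dm i j * ud i j)"
  proof -
    have "(\<Sum>i\<in>UNIV. \<Sum>j\<in>UNIV. Dm i j * ud j i) = (\<Sum>j\<in>UNIV. \<Sum>i\<in>UNIV. Dm i j * ud j i)"
      by (rule sum.swap)
    also have "\<dots> = (\<Sum>j\<in>UNIV. \<Sum>i\<in>UNIV. Dm j i * ud j i)" using sym by simp
    finally show ?thesis .
  qed
  have b: "(\<Sum>i\<in>UNIV. \<Sum>j\<in>UNIV. Dm i j * Dm i j)
      = ((\<Sum>i\<in>UNIV. \<Sum>j\<in>UNIV. Dm i j * ud j i) + (\<Sum>i\<in>UNIV. \<Sum>j\<in>UNIV. Dm i j * ud i j)) / 2"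
  proof -
    have e: "Dm i j * Dm i j = (Dm i j * ud j i + Dm i j * ud i j) / 2" for i j
      unfolding Dm_def[of i j] by (simp add: algebra_simps add_divide_distrib)
    show ?thesis by (simp only: e sum_divide_distrib[symmetric] sum.distrib)
  qed
  have c: "(\<Sum>i\<in>UNIV. \<Sum>j\<in>UNIV. (if i = j then G * (\<Sum>k\<in>UNIV. ud k k) else 0) * ud i j)
      = G * ((\<Sum>k\<in>UNIV. ud k k) * (\<Sum>k\<in>UNIV. ud k k))"
  proof -
    define K where "K = (\<Sum>k\<in>UNIV. ud k k)"
    have e: "(\<Sum>j\<in>UNIV. (if i = j then G * K else 0) * ud i j) = G * K * ud i i" for i
      by (simp add: if_distrib[of "\<lambda>x. x * _"] cong: if_cong)
    have "(\<Sum>i\<in>UNIV. G * K * ud i i) = G * K * K" unfolding K_def by (simp add: sum_distrib_left)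
    then show ?thesis unfolding K_def[symmetric] e by simp
  qed
  have "(\<Sum>i\<in>UNIV. \<Sum>j\<in>UNIV. (H * Dm i j + (if i = j then G * (\<Sum>k\<in>UNIV. ud k k) else 0)) * ud i j)
    = H * (\<Sum>i\<in>UNIV. \<Sum>j\<in>UNIV. Dm i j * ud i j)
      + (\<Sum>i\<in>UNIV. \<Sum>j\<in>UNIV. (if i = j then G * (\<Sum>k\<in>UNIV. ud k k) else 0) * ud i j)"
    by (simp add: distrib_right sum.distrib sum_distrib_left mult.assoc)
  also have "\<dots> = H * (\<Sum>i\<in>UNIV. \<Sum>j\<in>UNIV. Dm i j * Dm i j) + G * ((\<Sum>k\<in>UNIV. ud k k) * (\<Sum>k\<in>UNIV. ud k k))"
    unfolding c b a by simp
  finally show ?thesis unfolding Dm_def .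
qed


context solA begin

lemma pointwise:
  assumes z: "z \<in> SS"
  shows "ddir Et Ep z = (\<Sum>i\<in>UNIV. ddir (Ei i) (Flux i) z)
     - 2 * \<nu> * (HR z * (\<Sum>i\<in>UNIV. \<Sum>j\<in>UNIV. Dm i j z * Dm i j z) + GR z * (Dv z * Dv z))
     - ptil \<epsilon> (RR z) * (\<Sum>j\<in>UNIV. UU j z * UU j z)"
proof -
  have hEp: "ddir Et Ep z = (ddir Et RR z * (\<Sum>j\<in>UNIV. UU j z * UU j z) +
      RR z * (\<Sum>j\<in>UNIV. 2 * (UU j z * ddir Et (UU j) z))) / 2 +
     Qf z * ddir Et RR z +
     2 * \<kappa>\<^sup>2 * (\<Sum>i\<in>UNIV. 2 * (Psi i z * ddir (Ei i) Phit z))"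
    unfolding Ep_def using z
    by (simp add: ddir_add_S ddir_mult_S ddir_divc_S ddir_sum_S ddir_const ddir_Fa ddir_Psi_t)
  have hF: "ddir (Ei i) (Flux i) z = 2 * \<nu> *
     (\<Sum>j\<in>UNIV. ddir (Ei i) (Sig i j) z * UU j z + Sig i j z * ddir (Ei i) (UU j) z) -
     ((ddir (Ei i) RR z * UU i z + RR z * ddir (Ei i) (UU i) z) *
      (\<Sum>j\<in>UNIV. UU j z * UU j z) +
      RR z * UU i z * (\<Sum>j\<in>UNIV. 2 * (UU j z * ddir (Ei i) (UU j) z))) / 2 -
     ((pcf (pcd (pcd (LF \<nu> \<kappa> \<epsilon> \<gamma>))) (RR z) * ddir (Ei i) RR z * RR z +
       Qf z * ddir (Ei i) RR z) * UU i z +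
      Qf z * RR z * ddir (Ei i) (UU i) z) +
     2 * \<kappa>\<^sup>2 *
     ((ddir (Ei i) RR z * UU i z + RR z * ddir (Ei i) (UU i) z) * WW z +
      RR z * UU i z * ddir (Ei i) WW z) +
     4 * \<kappa>\<^sup>2 *
     (ddir (Ei i) (Psi i) z * Phit z + Psi i z * ddir (Ei i) Phit z)" for i
    unfolding Flux_def using z
    by (simp add: ddir_add_S ddir_mult_S ddir_divc_S ddir_diff_S ddir_minus_S ddir_sum_S ddir_const ddir_Qf)
  have hC: "ddir Et RR z +
      (\<Sum>i\<in>UNIV. ddir (Ei i) RR z * UU i z + RR z * ddir (Ei i) (UU i) z) = 0"
    using eqC[OF z] z by (simp add: ddir_mult_S)
  have hM: "ddir Et RR z * UU j z + RR z * ddir Et (UU j) z +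
      (\<Sum>i\<in>UNIV.
         (ddir (Ei i) RR z * UU i z + RR z * ddir (Ei i) (UU i) z) * UU j z +
         RR z * UU i z * ddir (Ei i) (UU j) z) -
      2 * \<nu> * (\<Sum>i\<in>UNIV. ddir (Ei i) (Sig i j) z) +
      pcf (pcd (LP \<nu> \<kappa> \<epsilon> \<gamma>)) (RR z) * ddir (Ei j) RR z +
      ptil \<epsilon> (RR z) * UU j z =
      \<kappa>\<^sup>2 * (2 * RR z * ddir (Ei j) WW z)" for j
    using eqM[OF z, of j] z by (simp add: ddir_mult_S ddir_Pp)
  have hQ: "RR z * pcf (pcd (pcd (LF \<nu> \<kappa> \<epsilon> \<gamma>))) (RR z) = pcf (pcd (LP \<nu> \<kappa> \<epsilon> \<gamma>)) (RR z)"
    by (rule QP[OF pterms_ne1[OF eps gam] RR_pos[OF z] gam])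
  have hW: "Phit z * (\<Sum>i\<in>UNIV. ddir (Ei i) (Psi i) z) = ddir Et RR z * WW z / 2"
  proof -
    have s: "sqrt (RR z) > 0" using RR_pos[OF z] by simp
    show ?thesis unfolding Phit_eq[OF z] WW_def DivPsi_def hpR_def Sq_def
      using s by (simp add: field_simps)
  qed
  have hD: "(\<Sum>i\<in>UNIV. \<Sum>j\<in>UNIV. Sig i j z * ddir (Ei i) (UU j) z)
      = HR z * (\<Sum>i\<in>UNIV. \<Sum>j\<in>UNIV. Dm i j z * Dm i j z) + GR z * (Dv z * Dv z)"
    unfolding Sig_def Dm_def Dv_def by (rule diss_alg)
  show ?thesis by (rule final_alg[OF hEp hF hC hM hQ hW hD])
qed

end

context solA begin

definition per :: "(real \<times> (real^'n) \<Rightarrow> real) \<Rightarrow> bool" where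
  "per F \<longleftrightarrow> (\<forall>t x k. t \<in> {0<..<T} \<longrightarrow> F (t, x + axis k 1) = F (t, x))"

lemma per_RR[simp]: "per RR"
  using sol unfolding is_smooth_solution_A_def per_def by auto

lemma per_UU[simp]: "per (UU j)"
  using sol unfolding is_smooth_solution_A_def per_def by auto

lemma per_const[simp]: "per (\<lambda>_. c)" unfolding per_def by simp
lemma per_add[simp]: "per F \<Longrightarrow> per G \<Longrightarrow> per (\<lambda>z. F z + G z)" unfolding per_def by simp
lemma per_diff[simp]: "per F \<Longrightarrow> per G \<Longrightarrow> per (\<lambda>z. F z - G z)" unfolding per_def by simp
lemma per_mult[simp]: "per F \<Longrightarrow> per G \<Longrightarrow> per (\<lambda>z. F z * G z)" unfolding per_def by simp
lemma per_divide[simp]: "per F \<Longrightarrow> per G \<Longrightarrow> per (\<lambda>z. F z / G z)" unfolding per_def by simp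
lemma per_minus[simp]: "per F \<Longrightarrow> per (\<lambda>z. - F z)" unfolding per_def by simp
lemma per_if[simp]: "per F \<Longrightarrow> per (\<lambda>z. if P then F z else 0)" unfolding per_def by simp
lemma per_sum[simp]: "(\<And>i. per (f i)) \<Longrightarrow> per (\<lambda>z. \<Sum>i\<in>I. f i z)" unfolding per_def by simp
lemma per_comp: "per F \<Longrightarrow> per (\<lambda>z. \<phi> (F z))" unfolding per_def by simp

lemma per_ddir[simp]: "per F \<Longrightarrow> per (ddir v F)"
  unfolding per_def
proof (intro allI impI)
  fix t x k assume P: "\<forall>t x k. t \<in> {0<..<T} \<longrightarrow> F (t, x + axis k 1) = F (t, x)"
    and t: "t \<in> {0<..<T}"
  obtain v1 v2 where v: "v = (v1, v2)" by force
  have tx: "(t, x) \<in> SS" using t unfolding SS_def by auto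
  have ev: "eventually (\<lambda>s. s \<in> {s::real. (t, x) + s *\<^sub>R v \<in> SS}) (nhds 0)"
    using open_line[OF openSS, of "(t, x)" v] tx by (intro eventually_nhds_in_open) auto
  show "ddir v F (t, x + axis k 1) = ddir v F (t, x)"
    unfolding ddir_def
  proof (rule deriv_cong_ev[OF _ refl])
    show "eventually (\<lambda>s. F ((t, x + axis k 1) + s *\<^sub>R v) = F ((t, x) + s *\<^sub>R v)) (nhds 0)"
      using ev
    proof eventually_elim
      case (elim s)
      then have "t + s * v1 \<in> {0<..<T}" unfolding SS_def v by simp
      then have "F (t + s * v1, (x + s *\<^sub>R v2) + axis k 1) = F (t + s * v1, x + s *\<^sub>R v2)"
        using P by blast
      then show ?case unfolding v by (simp add: algebra_simps)
    qed
  qed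
qed

lemma per_Sq[simp]: "per Sq" unfolding Sq_def by (rule per_comp[OF per_RR])
lemma per_hpR[simp]: "per hpR" unfolding hpR_def by (rule per_comp[OF per_RR])
lemma per_HR[simp]: "per HR" unfolding HR_def by (rule per_comp[OF per_RR])
lemma per_GR[simp]: "per GR" unfolding GR_def by (rule per_comp[OF per_RR])
lemma per_Qf[simp]: "per Qf" unfolding Qf_def by (rule per_comp[OF per_RR])
lemma per_Phi[simp]: "per Phi" unfolding Phi_def by (rule per_comp[OF per_RR])
lemma per_Phit[simp]: "per Phit" unfolding Phit_def by simp
lemma per_Psi[simp]: "per (Psi i)" unfolding Psi_def by simp
lemma per_DivPsi[simp]: "per DivPsi" unfolding DivPsi_def by simp
lemma per_WW[simp]: "per WW" unfolding WW_def by simp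
lemma per_Dm[simp]: "per (Dm i j)" unfolding Dm_def by simp
lemma per_Dv[simp]: "per Dv" unfolding Dv_def by simp
lemma per_Sig[simp]: "per (Sig i j)" unfolding Sig_def by simp
lemma per_Flux[simp]: "per (Flux i)" unfolding Flux_def by simp

lemma slice_cont:
  assumes "smooth_on SS G" "t \<in> {0<..<T}"
  shows "continuous_on A (\<lambda>x. G (t, x))"
proof (rule continuous_on_compose2[OF P1_cont[OF smooth_P1[OF assms(1)]]])
  show "continuous_on A (\<lambda>x. (t, x))" by (intro continuous_intros)
  show "(\<lambda>x. (t, x)) ` A \<subseteq> SS" using assms(2) unfolding SS_def by auto
qed

lemma slice_int:
  assumes "smooth_on SS G" "t \<in> {0<..<T}"
  shows "(\<lambda>x. G (t, x)) integrable_on cbox a b"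
  by (rule integrable_continuous[OF slice_cont[OF assms]])

lemma ibp_S:
  assumes G: "smooth_on SS G" "per G" and t: "t \<in> {0<..<T}"
  shows "integral (cbox 0 One) (\<lambda>x. ddir (Ei i) G (t, x)) = 0"
proof (rule torus_ibp)
  show "continuous_on UNIV (\<lambda>x. G (t, x))" by (rule slice_cont[OF G(1) t])
  show "continuous_on UNIV (\<lambda>x. ddir (Ei i) G (t, x))" by (rule slice_cont[OF smooth_ddir[OF G(1)] t])
  fix x
  have tx: "(t, x) \<in> SS" using t unfolding SS_def by auto
  have "((\<lambda>s. G ((t, x) + s *\<^sub>R Ei i)) has_real_derivative ddir (Ei i) G (t, x)) (at 0)"
    by (rule smooth_deriv[OF G(1) tx])
  then show "((\<lambda>s. G (t, x + s *\<^sub>R axis i 1)) has_real_derivative ddir (Ei i) G (t, x)) (at 0)"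
    by (simp add: Ei_def)
  show "G (t, x + axis i 1) = G (t, x)" using G(2) t unfolding per_def by blast
  show "ddir (Ei i) G (t, x + axis i 1) = ddir (Ei i) G (t, x)"
    using per_ddir[OF G(2)] t unfolding per_def by blast
qed

lemma energy_deriv:
  assumes t0: "t0 \<in> {0<..<T}"
  shows "((\<lambda>s. integral (cbox 0 One) (\<lambda>x. Ep (s, x))) has_real_derivative
           integral (cbox 0 One) (\<lambda>x. ddir Et Ep (t0, x))) (at t0)"
proof -
  have "((\<lambda>s. integral (cbox 0 One) (\<lambda>x. Ep (s, x))) has_real_derivative
           integral (cbox 0 One) (\<lambda>x. ddir Et Ep (t0, x))) (at t0 within {0<..<T})"
  proof (rule leibniz_rule_field_derivative[where fx="\<lambda>s x. ddir Et Ep (s, x)"])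
    fix s x assume s: "s \<in> {0<..<T}" and x: "x \<in> cbox (0::real^'n) One"
    have sx: "(0, x) + s *\<^sub>R Et \<in> SS" using s unfolding SS_def Et_def by auto
    have "((\<lambda>s'. Ep ((0, x) + s' *\<^sub>R Et)) has_real_derivative ddir Et Ep ((0, x) + s *\<^sub>R Et)) (at s)"
      by (rule smooth_line_deriv[OF smooth_Ep sx])
    then have "((\<lambda>s. Ep (s, x)) has_real_derivative ddir Et Ep (s, x)) (at s)"
      by (simp add: Et_def)
    then show "((\<lambda>s. Ep (s, x)) has_real_derivative ddir Et Ep (s, x)) (at s within {0<..<T})"
      by (rule has_field_derivative_at_within)
  next
    fix s assume "s \<in> {0<..<T}"
    then show "(\<lambda>x. Ep (s, x)) integrable_on cbox 0 One" by (rule slice_int[OF smooth_Ep])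
  next
    have "continuous_on SS (ddir Et Ep)" by (rule P1_cont[OF smooth_P1[OF smooth_ddir[OF smooth_Ep]]])
    then have "continuous_on ({0<..<T} \<times> cbox 0 One) (ddir Et Ep)"
      by (rule continuous_on_subset) (auto simp: SS_def)
    then show "continuous_on ({0<..<T} \<times> cbox 0 One) (\<lambda>(s, x). ddir Et Ep (s, x))"
      by (simp add: case_prod_beta)
  qed (use t0 in auto)
  then show ?thesis using at_within_open[of t0 "{0<..<T}"] t0 by simp
qed

end


definition Lpt :: "real \<Rightarrow> (real \<times> real) list" where
  "Lpt \<epsilon> = [(lam \<epsilon>, 1 / \<epsilon>\<^sup>2), (lam \<epsilon>, - 1 / \<epsilon>\<^sup>2)]"

lemma ptil_pc: "r > 0 \<Longrightarrow> ptil \<epsilon> r = pcf (Lpt \<epsilon>) r"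
  by (simp add: ptil_def Lpt_def algebra_simps)

context solA begin

lemma smooth_ptR[simp]: "smooth_on SS (\<lambda>z. ptil \<epsilon> (RR z))"
  by (rule smooth_comp_pc[OF ptil_pc smooth_RR RR_pos])

lemma integrated:
  assumes t: "t \<in> {0<..<T}"
  shows "integral (cbox 0 One) (\<lambda>x. ddir Et Ep (t, x))
     + 2 * \<nu> * integral (cbox 0 One) (\<lambda>x. HR (t, x) * (\<Sum>i\<in>UNIV. \<Sum>j\<in>UNIV. Dm i j (t, x) * Dm i j (t, x)))
     + 2 * \<nu> * integral (cbox 0 One) (\<lambda>x. GR (t, x) * (Dv (t, x) * Dv (t, x)))
     + integral (cbox 0 One) (\<lambda>x. ptil \<epsilon> (RR (t, x)) * (\<Sum>j\<in>UNIV. UU j (t, x) * UU j (t, x))) = 0"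
proof -
  let ?Q = "cbox (0::real^'n) One"
  define A where "A x = HR (t, x) * (\<Sum>i\<in>UNIV. \<Sum>j\<in>UNIV. Dm i j (t, x) * Dm i j (t, x))" for x
  define B where "B x = GR (t, x) * (Dv (t, x) * Dv (t, x))" for x
  define C where "C x = ptil \<epsilon> (RR (t, x)) * (\<Sum>j\<in>UNIV. UU j (t, x) * UU j (t, x))" for x
  have tx: "(t, x) \<in> SS" for x using t unfolding SS_def by auto
  have pw: "(\<lambda>x. ddir Et Ep (t, x)) = (\<lambda>x. (\<Sum>i\<in>UNIV. ddir (Ei i) (Flux i) (t, x)) - 2 * \<nu> * (A x + B x) - C x)"
  proof
    fix x show "ddir Et Ep (t, x) = (\<Sum>i\<in>UNIV. ddir (Ei i) (Flux i) (t, x)) - 2 * \<nu> * (A x + B x) - C x"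
      unfolding A_def B_def C_def by (rule pointwise[OF tx])
  qed
  have iA: "A integrable_on ?Q"
    unfolding A_def using slice_int[of "\<lambda>z. HR z * (\<Sum>i\<in>UNIV. \<Sum>j\<in>UNIV. Dm i j z * Dm i j z)" t 0 One] t by simp
  have iB: "B integrable_on ?Q"
    unfolding B_def using slice_int[of "\<lambda>z. GR z * (Dv z * Dv z)" t 0 One] t by simp
  have iC: "C integrable_on ?Q"
    unfolding C_def using slice_int[of "\<lambda>z. ptil \<epsilon> (RR z) * (\<Sum>j\<in>UNIV. UU j z * UU j z)" t 0 One] t by simp
  have hf: "((\<lambda>x. ddir (Ei i) (Flux i) (t, x)) has_integral 0) ?Q" for i
  proof -
    have "(\<lambda>x. ddir (Ei i) (Flux i) (t, x)) integrable_on ?Q"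
      by (rule slice_int[OF smooth_ddir[OF smooth_Flux] t])
    from integrable_integral[OF this] show ?thesis unfolding ibp_S[OF smooth_Flux per_Flux t, of i] .
  qed
  have "((\<lambda>x. (\<Sum>i\<in>UNIV. ddir (Ei i) (Flux i) (t, x)) - 2 * \<nu> * (A x + B x) - C x) has_integral
          ((\<Sum>i\<in>UNIV. 0) - 2 * \<nu> * (integral ?Q A + integral ?Q B) - integral ?Q C)) ?Q"
  proof -
    have h1: "((\<lambda>x. \<Sum>i\<in>UNIV. ddir (Ei i) (Flux i) (t, x)) has_integral (\<Sum>i\<in>UNIV. (0::real))) ?Q"
      using has_integral_sum[of UNIV "\<lambda>i x. ddir (Ei i) (Flux i) (t, x)" "\<lambda>i. 0" ?Q] hf by simp
    have h2: "((\<lambda>x. A x + B x) has_integral (integral ?Q A + integral ?Q B)) ?Q"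
      by (rule has_integral_add[OF integrable_integral[OF iA] integrable_integral[OF iB]])
    have h3: "((\<lambda>x. 2 * \<nu> * (A x + B x)) has_integral (2 * \<nu> * (integral ?Q A + integral ?Q B))) ?Q"
      by (rule has_integral_mult_right[OF h2])
    show ?thesis
      by (rule has_integral_diff[OF has_integral_diff[OF h1 h3] integrable_integral[OF iC]])
  qed
  then have "integral ?Q (\<lambda>x. ddir Et Ep (t, x)) = - 2 * \<nu> * (integral ?Q A + integral ?Q B) - integral ?Q C"
    unfolding pw by (simp add: integral_unique)
  moreover have "integral ?Q A = integral ?Q (\<lambda>x. HR (t, x) * (\<Sum>i\<in>UNIV. \<Sum>j\<in>UNIV. Dm i j (t, x) * Dm i j (t, x)))"
    unfolding A_def ..
  moreover have "integral ?Q B = integral ?Q (\<lambda>x. GR (t, x) * (Dv (t, x) * Dv (t, x)))"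
    unfolding B_def ..
  moreover have "integral ?Q C = integral ?Q (\<lambda>x. ptil \<epsilon> (RR (t, x)) * (\<Sum>j\<in>UNIV. UU j (t, x) * UU j (t, x)))"
    unfolding C_def ..
  ultimately show ?thesis by (simp only:) (simp add: algebra_simps)
qed

end


lemma norm_sq_vec: "(norm (v::real^'n))\<^sup>2 = (\<Sum>j\<in>UNIV. v $ j * v $ j)"
  by (simp add: power2_norm_eq_inner inner_vec_def)

context solA begin

lemma E_conv: "\<rho> s x * (norm (u s x))\<^sup>2 / 2 + \<rho> s x powr \<gamma> / (\<gamma> - 1)
            + ffun \<nu> \<kappa> \<epsilon> \<gamma> (\<rho> s x)
            + 2 * \<kappa>\<^sup>2 * (norm (hp \<epsilon> \<gamma> (\<rho> s x) *\<^sub>R grad (\<lambda>y. sqrt (\<rho> s y)) x))\<^sup>2 = Ep (s, x)"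
  unfolding norm_sq_vec
  by (simp add: Ep_def Fa_def Psi_def hpR_def grad_def conv_dxsqrt add.assoc)

lemma H_conv: "hfun \<epsilon> \<gamma> (\<rho> t x) * (\<Sum>i\<in>UNIV. \<Sum>j\<in>UNIV. (Dsym (u t) i j x)\<^sup>2)
   = HR (t, x) * (\<Sum>i\<in>UNIV. \<Sum>j\<in>UNIV. Dm i j (t, x) * Dm i j (t, x))"
  by (simp add: HR_def conv_Dsym power2_eq_square)

lemma G_conv: "gfun \<epsilon> \<gamma> (\<rho> t x) * (divg (u t) x)\<^sup>2 = GR (t, x) * (Dv (t, x) * Dv (t, x))"
  by (simp add: GR_def conv_divg power2_eq_square)

lemma P_conv: "ptil \<epsilon> (\<rho> t x) * (norm (u t x))\<^sup>2 = ptil \<epsilon> (RR (t, x)) * (\<Sum>j\<in>UNIV. UU j (t, x) * UU j (t, x))"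
  by (simp add: norm_sq_vec)

end

theorem proposition4p1:
  fixes \<nu> \<kappa> \<gamma> :: real
  assumes "CARD('n::finite) = 2 \<or> CARD('n) = 3"
    and "0 < \<kappa>" and "\<kappa> < \<nu>" and "1 < \<gamma>"
  shows "\<exists>\<epsilon>0>0. \<forall>\<epsilon> T (\<rho> :: real \<Rightarrow> real^'n \<Rightarrow> real) (u :: real \<Rightarrow> real^'n \<Rightarrow> real^'n).
     0 < \<epsilon> \<and> \<epsilon> < \<epsilon>0 \<and> \<epsilon>\<^sup>2 * (\<gamma> - 1) < 1 \<and> 0 < T \<and>
     is_smooth_solution_A \<nu> \<kappa> \<gamma> \<epsilon> T \<rho> u \<longrightarrow>
     (\<forall>t\<in>{0<..<T}. \<exists>D.
        ((\<lambda>s. integral (cbox 0 One) (\<lambda>x.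
            \<rho> s x * (norm (u s x))\<^sup>2 / 2 + \<rho> s x powr \<gamma> / (\<gamma> - 1)
            + ffun \<nu> \<kappa> \<epsilon> \<gamma> (\<rho> s x)
            + 2 * \<kappa>\<^sup>2 * (norm (hp \<epsilon> \<gamma> (\<rho> s x) *\<^sub>R grad (\<lambda>y. sqrt (\<rho> s y)) x))\<^sup>2))
          has_real_derivative D) (at t) \<and>
        D + 2 * \<nu> * integral (cbox 0 One)
              (\<lambda>x. hfun \<epsilon> \<gamma> (\<rho> t x) * (\<Sum>i\<in>UNIV. \<Sum>j\<in>UNIV. (Dsym (u t) i j x)\<^sup>2))
          + 2 * \<nu> * integral (cbox 0 One) (\<lambda>x. gfun \<epsilon> \<gamma> (\<rho> t x) * (divg (u t) x)\<^sup>2)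
          + integral (cbox 0 One) (\<lambda>x. ptil \<epsilon> (\<rho> t x) * (norm (u t x))\<^sup>2) = 0)"
proof (rule exI[of _ "1/2"], intro conjI allI impI)
  show "(0::real) < 1/2" by simp
  fix \<epsilon> T :: real and \<rho> :: "real \<Rightarrow> real^'n \<Rightarrow> real" and u :: "real \<Rightarrow> real^'n \<Rightarrow> real^'n"
  assume H: "0 < \<epsilon> \<and> \<epsilon> < 1/2 \<and> \<epsilon>\<^sup>2 * (\<gamma> - 1) < 1 \<and> 0 < T \<and> is_smooth_solution_A \<nu> \<kappa> \<gamma> \<epsilon> T \<rho> u"
  interpret solA \<nu> \<kappa> \<gamma> \<epsilon> T \<rho> u
    using H assms(4) by unfold_locales auto
  show "\<forall>t\<in>{0<..<T}. \<exists>D.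
        ((\<lambda>s. integral (cbox 0 One) (\<lambda>x.
            \<rho> s x * (norm (u s x))\<^sup>2 / 2 + \<rho> s x powr \<gamma> / (\<gamma> - 1)
            + ffun \<nu> \<kappa> \<epsilon> \<gamma> (\<rho> s x)
            + 2 * \<kappa>\<^sup>2 * (norm (hp \<epsilon> \<gamma> (\<rho> s x) *\<^sub>R grad (\<lambda>y. sqrt (\<rho> s y)) x))\<^sup>2))
          has_real_derivative D) (at t) \<and>
        D + 2 * \<nu> * integral (cbox 0 One)
              (\<lambda>x. hfun \<epsilon> \<gamma> (\<rho> t x) * (\<Sum>i\<in>UNIV. \<Sum>j\<in>UNIV. (Dsym (u t) i j x)\<^sup>2))
          + 2 * \<nu> * integral (cbox 0 One) (\<lambda>x. gfun \<epsilon> \<gamma> (\<rho> t x) * (divg (u t) x)\<^sup>2)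
          + integral (cbox 0 One) (\<lambda>x. ptil \<epsilon> (\<rho> t x) * (norm (u t x))\<^sup>2) = 0"
  proof
    fix t assume t: "t \<in> {0<..<T}"
    show "\<exists>D.
        ((\<lambda>s. integral (cbox 0 One) (\<lambda>x.
            \<rho> s x * (norm (u s x))\<^sup>2 / 2 + \<rho> s x powr \<gamma> / (\<gamma> - 1)
            + ffun \<nu> \<kappa> \<epsilon> \<gamma> (\<rho> s x)
            + 2 * \<kappa>\<^sup>2 * (norm (hp \<epsilon> \<gamma> (\<rho> s x) *\<^sub>R grad (\<lambda>y. sqrt (\<rho> s y)) x))\<^sup>2))
          has_real_derivative D) (at t) \<and>
        D + 2 * \<nu> * integral (cbox 0 One)
              (\<lambda>x. hfun \<epsilon> \<gamma> (\<rho> t x) * (\<Sum>i\<in>UNIV. \<Sum>j\<in>UNIV. (Dsym (u t) i j x)\<^sup>2))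
          + 2 * \<nu> * integral (cbox 0 One) (\<lambda>x. gfun \<epsilon> \<gamma> (\<rho> t x) * (divg (u t) x)\<^sup>2)
          + integral (cbox 0 One) (\<lambda>x. ptil \<epsilon> (\<rho> t x) * (norm (u t x))\<^sup>2) = 0"
    proof (intro exI conjI)
      show "((\<lambda>s. integral (cbox 0 One) (\<lambda>x.
            \<rho> s x * (norm (u s x))\<^sup>2 / 2 + \<rho> s x powr \<gamma> / (\<gamma> - 1)
            + ffun \<nu> \<kappa> \<epsilon> \<gamma> (\<rho> s x)
            + 2 * \<kappa>\<^sup>2 * (norm (hp \<epsilon> \<gamma> (\<rho> s x) *\<^sub>R grad (\<lambda>y. sqrt (\<rho> s y)) x))\<^sup>2))
          has_real_derivative integral (cbox 0 One) (\<lambda>x. ddir Et Ep (t, x))) (at t)"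
        unfolding E_conv by (rule energy_deriv[OF t])
      show "integral (cbox 0 One) (\<lambda>x. ddir Et Ep (t, x)) + 2 * \<nu> * integral (cbox 0 One)
              (\<lambda>x. hfun \<epsilon> \<gamma> (\<rho> t x) * (\<Sum>i\<in>UNIV. \<Sum>j\<in>UNIV. (Dsym (u t) i j x)\<^sup>2))
          + 2 * \<nu> * integral (cbox 0 One) (\<lambda>x. gfun \<epsilon> \<gamma> (\<rho> t x) * (divg (u t) x)\<^sup>2)
          + integral (cbox 0 One) (\<lambda>x. ptil \<epsilon> (\<rho> t x) * (norm (u t x))\<^sup>2) = 0"
        unfolding H_conv G_conv P_conv by (rule integrated[OF t])
    qed
  qed
qed


end
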